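(* Let $d\ge1$, $M>d$ (or $M\ge d$ if $j=0$) and $j,k\ge0$ be fixed integers. Then as $N\to\infty$, $$s_{(N^d,\,j)/(k)}(1^{M})\sim N^{d(M-d)}\frac{G(d+1)G(M-d+1)}{G(M+1)}\sum_{r=0}^{\min(j,k)}\binom{M-d+j-r-1}{j-r}\binom{d+k-r-1}{k-r}.$$
   Context: $(N^d,j)$ denotes the partition with $d$ parts equal to $N$ followed by a part equal to $j$; $s_{(N^d,j)/(k)}(1^M)$ is the skew Schur polynomial of shape $(N^d,j)/(k)$ evaluated at $M$ variables equal to $1$. $G$ is the Barnes $G$-function ($G(1)=1$, $G(z+1)=\Gamma(z)G(z)$). For a nonnegative integer $b$, $\binom{a}{b}=a(a-1)\cdots(a-b+1)/b!$. $\sim$ denotes asymptotic equivalence as $N\to\infty$. *)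

theory Defs
  imports "HOL-Analysis.Analysis" "HOL-Library.Landau_Symbols"
begin

definition part :: "nat list \<Rightarrow> nat \<Rightarrow> nat" where
  "part l i = (if i < length l then l ! i else 0)"

text \<open>Cells (row i, column c), 0-based rows and 1-based columns, of the skew
  diagram lam/mu.\<close>
definition skew_cells :: "nat list \<Rightarrow> nat list \<Rightarrow> (nat \<times> nat) set" where
  "skew_cells lam mu = {(i, c). i < length lam \<and> part mu i < c \<and> c \<le> part lam i}"

definition ssyt :: "nat list \<Rightarrow> nat list \<Rightarrow> nat \<Rightarrow> (nat \<times> nat \<Rightarrow> nat) set" where
  "ssyt lam mu M = {T.
     (\<forall>x \<in> skew_cells lam mu. T x \<in> {1..M}) \<and>
     (\<forall>x. x \<notin> skew_cells lam mu \<longrightarrow> T x = 0) \<and>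
     (\<forall>i c. (i, c) \<in> skew_cells lam mu \<and> (i, c + 1) \<in> skew_cells lam mu
              \<longrightarrow> T (i, c) \<le> T (i, c + 1)) \<and>
     (\<forall>i c. (i, c) \<in> skew_cells lam mu \<and> (i + 1, c) \<in> skew_cells lam mu
              \<longrightarrow> T (i, c) < T (i + 1, c))}"

text \<open>The skew Schur polynomial s_{lam/mu} evaluated at M variables equal to 1,
  i.e. the number of semistandard skew tableaux with entries in {1..M}.\<close>
definition skew_schur_ones :: "nat list \<Rightarrow> nat list \<Rightarrow> nat \<Rightarrow> nat" where
  "skew_schur_ones lam mu M = card (ssyt lam mu M)"

text \<open>Barnes G-function at positive integers: G(n) = prod_{i=0}^{n-2} i!
  (determined by G(1)=1, G(z+1)=Gamma(z)G(z)).\<close>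
definition barnesG_nat :: "nat \<Rightarrow> real" where
  "barnesG_nat n = (\<Prod>i<n - 1. fact i)"

end

theory Submission
  imports Defs "Jordan_Normal_Form.Determinant" "HOL-Real_Asymp.Real_Asymp"
begin


lemma det_reduce_last_col:
  fixes E :: "nat \<Rightarrow> nat \<Rightarrow> real"
  assumes ones: "\<And>a. a \<le> n \<Longrightarrow> E a n = 1"
  shows "det (mat (Suc n) (Suc n) (\<lambda>(a,b). E a b)) =
         det (mat n n (\<lambda>(a,b). E a b - E (Suc a) b))"
proof -
  define A where "A = mat (Suc n) (Suc n) (\<lambda>(a,b). E a b)"
  define U :: "real mat" where "U = mat (Suc n) (Suc n) (\<lambda>(a,b). if a = b then 1 else if b = Suc a then -1 else 0)"
  have A: "A \<in> carrier_mat (Suc n) (Suc n)" and U: "U \<in> carrier_mat (Suc n) (Suc n)"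
    unfolding A_def U_def by auto
  have "upper_triangular U" unfolding U_def upper_triangular_def by auto
  hence dU: "det U = 1" using det_upper_triangular[OF _ U]
    by (simp add: prod_list_diag_prod U_def)
  have UA: "(U * A) $$ (a,b) = (if a < n then E a b - E (Suc a) b else E a b)"
    if "a < Suc n" "b < Suc n" for a b
  proof -
    have "(U * A) $$ (a,b) = (\<Sum>k<Suc n. U $$ (a,k) * A $$ (k,b))"
      using that A U by (simp add: scalar_prod_def row_def col_def atLeast0LessThan)
    also have "\<dots> = (\<Sum>k\<in>{a, Suc a} \<inter> {..<Suc n}. U $$ (a,k) * A $$ (k,b))"
      by (rule sum.mono_neutral_right) (use that in \<open>auto simp: U_def\<close>)
    also have "\<dots> = (if a < n then E a b - E (Suc a) b else E a b)"
      using that by (cases "a < n") (auto simp: U_def A_def insert_commute)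
    finally show ?thesis .
  qed
  define B1 where "B1 = mat n n (\<lambda>(a,b). E a b - E (Suc a) b)"
  define B3 :: "real mat" where "B3 = mat 1 n (\<lambda>(a,b). E n b)"
  define B4 :: "real mat" where "B4 = mat 1 1 (\<lambda>_. 1)"
  have eq: "U * A = four_block_mat B1 (0\<^sub>m n 1) B3 B4"
    apply (rule eq_matI)
    using A U ones by (auto simp: UA B1_def B3_def B4_def less_Suc_eq simp del: index_mult_mat(1))
  have "det A = det (U * A)" using det_mult[OF U A] dU by simp
  also have "\<dots> = det B1 * det B4"
    unfolding eq by (rule det_four_block_mat_upper_right_zero) (auto simp: B1_def B3_def B4_def)
  also have "det B4 = 1" unfolding B4_def by (simp add: det_single)
  finally show ?thesis by (simp add: A_def B1_def)
qed

lemma det_row_scale: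
  fixes f :: "nat \<Rightarrow> nat \<Rightarrow> real"
  shows "det (mat n n (\<lambda>(a,b). s a * f a b)) = (\<Prod>a<n. s a) * det (mat n n (\<lambda>(a,b). f a b))"
proof -
  have "det (mat n n (\<lambda>(a,b). s a * f a b)) =
      (\<Sum>p | p permutes {0..<n}. of_int (sign p) * (\<Prod>i = 0..<n. s i * f i (p i)))"
    by (subst det_def'[of _ n]) (auto intro!: sum.cong prod.cong simp: permutes_in_image)
  also have "\<dots> = (\<Prod>a<n. s a) * (\<Sum>p | p permutes {0..<n}. of_int (sign p) * (\<Prod>i = 0..<n. f i (p i)))"
    by (simp add: sum_distrib_left prod.distrib atLeast0LessThan mult_ac)
  also have "(\<Sum>p | p permutes {0..<n}. of_int (sign p) * (\<Prod>i = 0..<n. f i (p i))) = det (mat n n (\<lambda>(a,b). f a b))"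
    by (subst det_def'[of _ n]) (auto intro!: sum.cong prod.cong simp: permutes_in_image)
  finally show ?thesis .
qed

lemma det_col_scale:
  fixes f :: "nat \<Rightarrow> nat \<Rightarrow> real"
  shows "det (mat n n (\<lambda>(a,b). f a b * t b)) = (\<Prod>b<n. t b) * det (mat n n (\<lambda>(a,b). f a b))"
proof -
  have "det (mat n n (\<lambda>(a,b). f a b * t b)) =
      (\<Sum>p | p permutes {0..<n}. of_int (sign p) * (\<Prod>i = 0..<n. f i (p i) * t (p i)))"
    by (subst det_def'[of _ n]) (auto intro!: sum.cong prod.cong simp: permutes_in_image)
  also have "\<dots> = (\<Sum>p | p permutes {0..<n}. (\<Prod>b<n. t b) * (of_int (sign p) * (\<Prod>i = 0..<n. f i (p i))))"
  proof (rule sum.cong, simp)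
    fix p assume "p \<in> {p. p permutes {0..<n}}"
    hence p: "p permutes {0..<n}" by simp
    have "(\<Prod>i = 0..<n. t (p i)) = (\<Prod>b<n. t b)"
      using prod.permute[OF p, of t] by (simp add: atLeast0LessThan comp_def)
    thus "of_int (sign p) * (\<Prod>i = 0..<n. f i (p i) * t (p i)) =
        (\<Prod>b<n. t b) * (of_int (sign p) * (\<Prod>i = 0..<n. f i (p i)))"
      by (simp add: prod.distrib)
  qed
  also have "\<dots> = (\<Prod>b<n. t b) * (\<Sum>p | p permutes {0..<n}. of_int (sign p) * (\<Prod>i = 0..<n. f i (p i)))"
    by (simp add: sum_distrib_left)
  also have "(\<Sum>p | p permutes {0..<n}. of_int (sign p) * (\<Prod>i = 0..<n. f i (p i))) = det (mat n n (\<lambda>(a,b). f a b))"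
    by (subst det_def'[of _ n]) (auto intro!: sum.cong prod.cong simp: permutes_in_image)
  finally show ?thesis .
qed

definition ff :: "real \<Rightarrow> nat \<Rightarrow> real" where
  "ff t c = (\<Prod>i = 0..<c. t - of_nat i)"

definition Vdm :: "nat \<Rightarrow> (nat \<Rightarrow> real) \<Rightarrow> real" where
  "Vdm n x = (\<Prod>b<n. \<Prod>a<b. x a - x b)"

lemma ff_Suc: "ff t (Suc c) = ff t c * (t - of_nat c)"
  by (simp add: ff_def)

lemma vandermonde_ff:
  "det (mat n n (\<lambda>(a,b). ff (x a) (n - 1 - b))) = Vdm n x"
proof (induction n)
  case 0
  show ?case by (simp add: Vdm_def)
next
  case (Suc n)
  define A where "A = mat (Suc n) (Suc n) (\<lambda>(a,b). ff (x a) (Suc n - 1 - b))"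
  define C :: "real mat" where "C = mat (Suc n) (Suc n) (\<lambda>(i,j). if i = j then 1 else if i = Suc j then - (x n - of_nat (n - Suc j)) else 0)"
  have A: "A \<in> carrier_mat (Suc n) (Suc n)" and C: "C \<in> carrier_mat (Suc n) (Suc n)"
    unfolding A_def C_def by auto
  have dC: "det C = 1" using det_lower_triangular[OF _ C]
    by (simp add: prod_list_diag_prod C_def)
  have AC: "row A a \<bullet> col C b = (if b < n then ff (x a) (n - 1 - b) * (x a - x n) else 1)"
    if "a < Suc n" "b < Suc n" for a b
  proof -
    have "row A a \<bullet> col C b = (\<Sum>k<Suc n. A $$ (a,k) * C $$ (k,b))"
      using that A C by (simp add: scalar_prod_def row_def col_def atLeast0LessThan)
    also have "\<dots> = (\<Sum>k\<in>{b, Suc b} \<inter> {..<Suc n}. A $$ (a,k) * C $$ (k,b))"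
      by (rule sum.mono_neutral_right) (use that in \<open>auto simp: C_def\<close>)
    also have "\<dots> = (if b < n then ff (x a) (n - 1 - b) * (x a - x n) else 1)"
    proof (cases "b < n")
      case True
      have e: "n - b = Suc (n - 1 - b)" using True by simp
      have "n - Suc b = n - 1 - b" by simp
      with True that show ?thesis
        by (simp add: C_def A_def e ff_Suc algebra_simps)
    next
      case False
      with that have "b = n" by simp
      thus ?thesis using that by (simp add: C_def A_def ff_def)
    qed
    finally show ?thesis .
  qed
  define B1 where "B1 = mat n n (\<lambda>(a,b). (x a - x n) * ff (x a) (n - 1 - b))"
  define B2 :: "real mat" where "B2 = mat n 1 (\<lambda>_. 1)"
  define B4 :: "real mat" where "B4 = mat 1 1 (\<lambda>_. 1)"
  have eq: "A * C = four_block_mat B1 B2 (0\<^sub>m 1 n) B4"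
    apply (rule eq_matI)
    using A C by (auto simp: AC B1_def B2_def B4_def less_Suc_eq)
  have "det A = det (A * C)" using det_mult[OF A C] dC by simp
  also have "\<dots> = det B1 * det B4"
    unfolding eq by (rule det_four_block_mat_lower_left_zero) (auto simp: B1_def B2_def B4_def)
  also have "det B4 = 1" unfolding B4_def by (simp add: det_single)
  also have "det B1 = (\<Prod>a<n. x a - x n) * Vdm n x"
    unfolding B1_def det_row_scale Suc.IH ..
  finally show ?case by (simp add: A_def Vdm_def)
qed

definition sf :: "nat \<Rightarrow> real" where "sf n = (\<Prod>b<n. fact b)"

lemma gchoose_ff: "(t::real) gchoose c = ff t c / fact c"
  by (simp add: gbinomial_prod_rev ff_def)

lemma vandermonde_gchoose:
  "det (mat n n (\<lambda>(a,b). x a gchoose (n - 1 - b))) = Vdm n x / sf n"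
proof -
  have "det (mat n n (\<lambda>(a,b). x a gchoose (n - 1 - b))) =
        det (mat n n (\<lambda>(a,b). ff (x a) (n - 1 - b) * (1 / fact (n - 1 - b))))"
    by (simp add: gchoose_ff)
  also have "\<dots> = (\<Prod>b<n. 1 / fact (n - 1 - b)) * Vdm n x"
    by (subst det_col_scale[of _ _ "\<lambda>b. 1 / fact (n - 1 - b)"]) (use vandermonde_ff[of n x] in simp)
  also have "(\<Prod>b<n. 1 / fact (n - 1 - b) :: real) = 1 / sf n"
  proof -
    have "(\<Prod>b<n. fact (n - 1 - b) :: real) = (\<Prod>b<n. fact b)"
      by (rule prod.reindex_bij_witness[where i="\<lambda>b. n - 1 - b" and j="\<lambda>b. n - 1 - b"]) auto
    thus ?thesis by (simp add: sf_def prod_dividef)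
  qed
  finally show ?thesis by simp
qed

lemma sum_gchoose_interval:
  fixes s :: real
  assumes "lo \<le> hi"
  shows "(\<Sum>t = lo..hi. (real t + s) gchoose c) = ((real hi + s + 1) gchoose (Suc c)) - ((real lo + s) gchoose (Suc c))"
proof -
  define F where "F t = (real t + s) gchoose (Suc c)" for t
  have "(\<Sum>t = lo..hi. (real t + s) gchoose c) = (\<Sum>t = lo..hi. F (Suc t) - F t)"
  proof (rule sum.cong[OF refl])
    fix t
    have "(real t + s + 1) gchoose (Suc c) = ((real t + s) gchoose c) + ((real t + s) gchoose (Suc c))"
      by (rule gbinomial_Suc_Suc)
    thus "(real t + s) gchoose c = F (Suc t) - F t" by (simp add: F_def add_ac)
  qed
  also have "\<dots> = F (Suc hi) - F lo" by (rule sum_Suc_diff) (use assms in simp)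
  finally show ?thesis by (simp add: F_def add_ac)
qed

lemma gt_sum:
  fixes g :: "nat \<Rightarrow> nat"
  assumes mono: "\<And>a. a < n \<Longrightarrow> g (Suc a) \<le> g a"
  shows "(\<Sum>f \<in> PiE {0..<n} (\<lambda>a. {g (Suc a)..g a}).
            det (mat n n (\<lambda>(a,b). (real (f a) + real n - 1 - real a) gchoose (n - 1 - b))))
       = det (mat (Suc n) (Suc n) (\<lambda>(a,b). (real (g a) + real n - real a) gchoose (n - b)))"
proof -
  define I where "I = (\<lambda>a. {g (Suc a)..g a})"
  define h where "h = (\<lambda>i t b. (real t + real n - 1 - real i) gchoose (n - 1 - b))"
  define D where "D = (\<lambda>i b. ((real (g i) + real n - real i) gchoose (n - b))
                         - ((real (g (Suc i)) + real n - real (Suc i)) gchoose (n - b)))"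
  have fin: "finite {p. p permutes {0..<n}}" by (simp add: finite_permutations)
  have "(\<Sum>f \<in> PiE {0..<n} I. det (mat n n (\<lambda>(a,b). (real (f a) + real n - 1 - real a) gchoose (n - 1 - b))))
      = (\<Sum>f \<in> PiE {0..<n} I. \<Sum>p | p permutes {0..<n}. of_int (sign p) * (\<Prod>i = 0..<n. h i (f i) (p i)))"
    by (rule sum.cong[OF refl], subst det_def'[of _ n])
       (auto intro!: sum.cong prod.cong simp: permutes_in_image h_def)
  also have "\<dots> = (\<Sum>p | p permutes {0..<n}. of_int (sign p) * (\<Sum>f \<in> PiE {0..<n} I. \<Prod>i = 0..<n. h i (f i) (p i)))"
    by (subst sum.swap) (simp add: sum_distrib_left)
  also have "\<dots> = (\<Sum>p | p permutes {0..<n}. of_int (sign p) * (\<Prod>i = 0..<n. \<Sum>t\<in>I i. h i t (p i)))"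
    by (rule sum.cong[OF refl], subst prod_sum_PiE) (auto simp: I_def)
  also have "\<dots> = (\<Sum>p | p permutes {0..<n}. of_int (sign p) * (\<Prod>i = 0..<n. D i (p i)))"
  proof (rule sum.cong[OF refl], rule arg_cong[where f="\<lambda>x. _ * x"], rule prod.cong[OF refl])
    fix p i assume p: "p \<in> {p. p permutes {0..<n}}" and i: "i \<in> {0..<n}"
    have pi: "p i < n" using p i permutes_in_image by fastforce
    have "(\<Sum>t\<in>I i. h i t (p i)) = (\<Sum>t = g (Suc i)..g i. (real t + (real n - 1 - real i)) gchoose (n - 1 - p i))"
      by (simp add: I_def h_def algebra_simps)
    also have "\<dots> = ((real (g i) + (real n - 1 - real i) + 1) gchoose (Suc (n - 1 - p i)))
                   - ((real (g (Suc i)) + (real n - 1 - real i)) gchoose (Suc (n - 1 - p i)))"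
      by (rule sum_gchoose_interval) (use mono i in auto)
    also have "\<dots> = D i (p i)"
      using pi by (simp add: D_def Suc_diff_Suc algebra_simps)
    finally show "(\<Sum>t\<in>I i. h i t (p i)) = D i (p i)" .
  qed
  also have "\<dots> = det (mat n n (\<lambda>(a,b). D a b))"
    by (subst det_def'[of _ n]) (auto intro!: sum.cong prod.cong simp: permutes_in_image)
  also have "\<dots> = det (mat (Suc n) (Suc n) (\<lambda>(a,b). (real (g a) + real n - real a) gchoose (n - b)))"
    by (subst det_reduce_last_col[where E="\<lambda>a b. (real (g a) + real n - real a) gchoose (n - b)"])
       (simp_all add: D_def)
  finally show ?thesis by (simp add: I_def)
qed


lemma finite_skew_cells: "finite (skew_cells lam mu)"
proof -
  have "skew_cells lam mu \<subseteq> (\<Union>i<length lam. {i} \<times> {..part lam i})"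
    by (auto simp: skew_cells_def)
  thus ?thesis by (rule finite_subset) auto
qed

lemma finite_bounded_zero_funs:
  assumes "finite C"
  shows "finite {T :: 'a \<Rightarrow> nat. (\<forall>x. x \<notin> C \<longrightarrow> T x = 0) \<and> (\<forall>x. T x \<le> M)}"
proof -
  have "{T :: 'a \<Rightarrow> nat. (\<forall>x. x \<notin> C \<longrightarrow> T x = 0) \<and> (\<forall>x. T x \<le> M)} \<subseteq>
        (\<lambda>g x. if x \<in> C then g x else 0) ` (PiE C (\<lambda>_. {..M}))"
  proof
    fix T :: "'a \<Rightarrow> nat" assume T: "T \<in> {T. (\<forall>x. x \<notin> C \<longrightarrow> T x = 0) \<and> (\<forall>x. T x \<le> M)}"
    have "T = (\<lambda>x. if x \<in> C then restrict T C x else 0)" using T by (auto simp: fun_eq_iff)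
    moreover have "restrict T C \<in> PiE C (\<lambda>_. {..M})" using T by auto
    ultimately show "T \<in> (\<lambda>g x. if x \<in> C then g x else 0) ` (PiE C (\<lambda>_. {..M}))" by blast
  qed
  thus ?thesis by (rule finite_subset) (intro finite_imageI finite_PiE assms, auto)
qed

lemma ssytD:
  assumes "T \<in> ssyt lam mu M"
  shows "\<And>x. x \<in> skew_cells lam mu \<Longrightarrow> T x \<in> {1..M}"
    and "\<And>x. x \<notin> skew_cells lam mu \<Longrightarrow> T x = 0"
    and "\<And>i c. (i, c) \<in> skew_cells lam mu \<Longrightarrow> (i, c + 1) \<in> skew_cells lam mu \<Longrightarrow> T (i, c) \<le> T (i, c + 1)"
    and "\<And>i c. (i, c) \<in> skew_cells lam mu \<Longrightarrow> (i + 1, c) \<in> skew_cells lam mu \<Longrightarrow> T (i, c) < T (i + 1, c)"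
  using assms unfolding ssyt_def by blast+

lemma finite_ssyt: "finite (ssyt lam mu M)"
proof -
  have "ssyt lam mu M \<subseteq> {T. (\<forall>x. x \<notin> skew_cells lam mu \<longrightarrow> T x = 0) \<and> (\<forall>x. T x \<le> M)}"
  proof (clarify, intro conjI allI impI)
    fix T x assume T: "T \<in> ssyt lam mu M"
    show "x \<notin> skew_cells lam mu \<Longrightarrow> T x = 0" using ssytD(2)[OF T] .
    show "T x \<le> M" using ssytD(1,2)[OF T, of x] by (cases "x \<in> skew_cells lam mu") auto
  qed
  thus ?thesis by (rule finite_subset) (intro finite_bounded_zero_funs finite_skew_cells)
qed

lemma ssytI:
  assumes "\<And>x. x \<in> skew_cells lam mu \<Longrightarrow> T x \<in> {1..M}"
    and "\<And>x. x \<notin> skew_cells lam mu \<Longrightarrow> T x = 0"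
    and "\<And>i c. (i, c) \<in> skew_cells lam mu \<Longrightarrow> (i, c + 1) \<in> skew_cells lam mu \<Longrightarrow> T (i, c) \<le> T (i, c + 1)"
    and "\<And>i c. (i, c) \<in> skew_cells lam mu \<Longrightarrow> (i + 1, c) \<in> skew_cells lam mu \<Longrightarrow> T (i, c) < T (i + 1, c)"
  shows "T \<in> ssyt lam mu M"
  using assms unfolding ssyt_def by blast

lemma ssyt_row_mono:
  assumes T: "T \<in> ssyt lam mu M" and x: "(i, c) \<in> skew_cells lam mu" and y: "(i, c') \<in> skew_cells lam mu"
    and le: "c \<le> c'"
  shows "T (i, c) \<le> T (i, c')"
  using le y
proof (induction c' rule: dec_induct)
  case base thus ?case by simp
next
  case (step k)
  have "(i, k) \<in> skew_cells lam mu" using step x by (auto simp: skew_cells_def)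
  hence "T (i, k) \<le> T (i, k + 1)" using ssytD(3)[OF T] step by simp
  thus ?case using step \<open>(i, k) \<in> skew_cells lam mu\<close> by simp
qed

lemma cells_nil: "(i, c) \<in> skew_cells lam [] \<longleftrightarrow> i < length lam \<and> 0 < c \<and> c \<le> lam ! i"
  by (simp add: skew_cells_def part_def)

lemma ssyt_straight_lower:
  assumes T: "T \<in> ssyt lam [] M" and dec: "\<And>i. Suc i < length lam \<Longrightarrow> lam ! Suc i \<le> lam ! i"
  shows "(i, c) \<in> skew_cells lam [] \<Longrightarrow> Suc i \<le> T (i, c)"
proof (induction i)
  case 0 thus ?case using ssytD(1)[OF T, of "(0,c)"] by auto
next
  case (Suc i)
  have "(i, c) \<in> skew_cells lam []" using Suc.prems dec[of i] by (auto simp: cells_nil)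
  with Suc show ?case using ssytD(4)[OF T, of i c] by simp
qed

lemma map_restrict_upt: "map (restrict g {0..<m}) [0..<m] = map g [0..<m]"
  by (rule map_cong) auto

definition shp :: "(nat \<times> nat \<Rightarrow> nat) \<Rightarrow> nat list \<Rightarrow> nat \<Rightarrow> nat \<Rightarrow> nat" where
  "shp T lam m a = Max (insert 0 {c. 1 \<le> c \<and> c \<le> lam ! a \<and> T (a, c) \<le> m})"

context
  fixes lam :: "nat list" and m :: nat
  assumes len: "length lam = Suc m"
    and dec: "\<And>i. Suc i < length lam \<Longrightarrow> lam ! Suc i \<le> lam ! i"
begin

lemma shp_iff:
  assumes T: "T \<in> ssyt lam [] (Suc m)" and a: "a < Suc m" and c: "1 \<le> c" "c \<le> lam ! a"
  shows "T (a, c) \<le> m \<longleftrightarrow> c \<le> shp T lam m a"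
proof -
  define A where "A = {c. 1 \<le> c \<and> c \<le> lam ! a \<and> T (a, c) \<le> m}"
  have finA: "finite A" by (rule finite_subset[of _ "{..lam ! a}"]) (auto simp: A_def)
  show ?thesis
  proof
    assume "T (a, c) \<le> m"
    hence "c \<in> A" using c by (simp add: A_def)
    thus "c \<le> shp T lam m a" unfolding shp_def A_def[symmetric] using finA by simp
  next
    assume le: "c \<le> shp T lam m a"
    show "T (a, c) \<le> m"
    proof (cases "A = {}")
      case True
      hence "shp T lam m a = 0" unfolding shp_def A_def[symmetric] by simp
      with le c show ?thesis by simp
    next
      case False
      have "Max (insert 0 A) = Max A" using False finA by (simp add: max_def)
      moreover have "Max A \<in> A" using finA False by (rule Max_in)
      ultimately have s: "shp T lam m a \<in> A" unfolding shp_def A_def[symmetric] by simp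
      hence "T (a, c) \<le> T (a, shp T lam m a)"
        using le c a len by (intro ssyt_row_mono[OF T]) (auto simp: A_def cells_nil)
      thus ?thesis using s by (simp add: A_def)
    qed
  qed
qed

lemma shp_bounds:
  assumes T: "T \<in> ssyt lam [] (Suc m)" and a: "a < m"
  shows "lam ! Suc a \<le> shp T lam m a" "shp T lam m a \<le> lam ! a"
proof -
  define A where "A = {c. 1 \<le> c \<and> c \<le> lam ! a \<and> T (a, c) \<le> m}"
  have finA: "finite A" by (rule finite_subset[of _ "{..lam ! a}"]) (auto simp: A_def)
  show "shp T lam m a \<le> lam ! a" unfolding shp_def A_def[symmetric] using finA
    by (subst Max_le_iff) (auto simp: A_def)
  show "lam ! Suc a \<le> shp T lam m a"
  proof (cases "lam ! Suc a = 0")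
    case False
    let ?l = "lam ! Suc a"
    have c1: "(Suc a, ?l) \<in> skew_cells lam []" using False a len by (simp add: cells_nil)
    have c0: "(a, ?l) \<in> skew_cells lam []" using False a len dec[of a] by (simp add: cells_nil)
    have "T (a, ?l) < T (Suc a, ?l)" using ssytD(4)[OF T c0] c1 by simp
    moreover have "T (Suc a, ?l) \<le> Suc m" using ssytD(1)[OF T c1] by simp
    ultimately have "?l \<in> A" using False dec[of a] a len by (simp add: A_def)
    thus ?thesis unfolding shp_def A_def[symmetric] using finA by simp
  qed simp
qed

lemma cells_map: "(i, c) \<in> skew_cells (map f [0..<m]) [] \<longleftrightarrow> i < m \<and> 0 < c \<and> c \<le> f i"
  by (auto simp: cells_nil)

definition res :: "(nat \<times> nat \<Rightarrow> nat) \<Rightarrow> (nat \<times> nat \<Rightarrow> nat)" where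
  "res T = (\<lambda>x. if T x \<le> m then T x else 0)"

definition extT :: "(nat \<Rightarrow> nat) \<Rightarrow> (nat \<times> nat \<Rightarrow> nat) \<Rightarrow> (nat \<times> nat \<Rightarrow> nat)" where
  "extT f S = (\<lambda>x. if x \<in> skew_cells (map f [0..<m]) [] then S x
                  else if x \<in> skew_cells lam [] then Suc m else 0)"

lemma last_row_top:
  assumes T: "T \<in> ssyt lam [] (Suc m)" and x: "(m, c) \<in> skew_cells lam []"
  shows "T (m, c) = Suc m"
  using ssyt_straight_lower[OF T dec x] ssytD(1)[OF T x] by simp

lemma res_cells:
  assumes T: "T \<in> ssyt lam [] (Suc m)"
  shows "x \<in> skew_cells (map (shp T lam m) [0..<m]) [] \<longleftrightarrow> x \<in> skew_cells lam [] \<and> T x \<le> m"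
proof (cases x)
  case (Pair i c)
  show ?thesis
  proof (cases "i < m")
    case True
    thus ?thesis using Pair shp_iff[OF T, of i c] shp_bounds[OF T True] len
      by (auto simp: cells_map cells_nil)
  next
    case False
    show ?thesis
    proof (cases "i = m")
      case True
      thus ?thesis using Pair last_row_top[OF T] by (auto simp: cells_map)
    next
      case False
      thus ?thesis using Pair \<open>\<not> i < m\<close> len by (auto simp: cells_map cells_nil)
    qed
  qed
qed

lemma res_ssyt:
  assumes T: "T \<in> ssyt lam [] (Suc m)" and f: "f = map (shp T lam m) [0..<m]"
  shows "res T \<in> ssyt f [] m"
proof (rule ssytI)
  fix x assume "x \<in> skew_cells f []"
  hence x: "x \<in> skew_cells lam []" "T x \<le> m" using res_cells[OF T] f by auto
  thus "res T x \<in> {1..m}" using ssytD(1)[OF T x(1)] by (auto simp: res_def)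
next
  fix x assume "x \<notin> skew_cells f []"
  hence "x \<notin> skew_cells lam [] \<or> \<not> T x \<le> m" using res_cells[OF T] f by auto
  thus "res T x = 0" using ssytD(2)[OF T, of x] by (auto simp: res_def)
next
  fix i c assume "(i, c) \<in> skew_cells f []" "(i, c + 1) \<in> skew_cells f []"
  thus "res T (i, c) \<le> res T (i, c + 1)" using res_cells[OF T] f ssytD(3)[OF T]
    by (auto simp: res_def)
next
  fix i c assume "(i, c) \<in> skew_cells f []" "(i + 1, c) \<in> skew_cells f []"
  thus "res T (i, c) < res T (i + 1, c)" using res_cells[OF T] f ssytD(4)[OF T]
    by (auto simp: res_def)
qed

lemma ext_ssyt:
  assumes f: "f \<in> PiE {0..<m} (\<lambda>a. {lam ! Suc a..lam ! a})" and S: "S \<in> ssyt (map f [0..<m]) [] m"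
  shows "extT f S \<in> ssyt lam [] (Suc m)"
proof -
  have fb: "lam ! Suc a \<le> f a" "f a \<le> lam ! a" if "a < m" for a using f that by auto
  have sub: "x \<in> skew_cells (map f [0..<m]) [] \<Longrightarrow> x \<in> skew_cells lam []" for x
    using fb len by (cases x) (auto simp: cells_map cells_nil intro: order_trans)
  show ?thesis
  proof (rule ssytI)
    fix x assume x: "x \<in> skew_cells lam []"
    show "extT f S x \<in> {1..Suc m}" using ssytD(1)[OF S, of x] x by (auto simp: extT_def)
  next
    fix x assume "x \<notin> skew_cells lam []"
    thus "extT f S x = 0" using sub[of x] by (auto simp: extT_def)
  next
    fix i c assume a: "(i, c) \<in> skew_cells lam []" "(i, c + 1) \<in> skew_cells lam []"
    show "extT f S (i, c) \<le> extT f S (i, c + 1)"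
    proof (cases "(i, c + 1) \<in> skew_cells (map f [0..<m]) []")
      case True
      hence "(i, c) \<in> skew_cells (map f [0..<m]) []" using a by (auto simp: cells_map cells_nil)
      thus ?thesis using True ssytD(3)[OF S] by (auto simp: extT_def)
    next
      case False
      thus ?thesis using a ssytD(1)[OF S, of "(i,c)"] by (auto simp: extT_def)
    qed
  next
    fix i c assume a: "(i, c) \<in> skew_cells lam []" "(i + 1, c) \<in> skew_cells lam []"
    have c0: "(i, c) \<in> skew_cells (map f [0..<m]) []"
    proof -
      have "i < m" using a len by (simp add: cells_nil)
      moreover have "c \<le> lam ! Suc i" using a by (simp add: cells_nil)
      ultimately show ?thesis using fb[of i] a by (auto simp: cells_map cells_nil)
    qed
    show "extT f S (i, c) < extT f S (i + 1, c)"
    proof (cases "(i + 1, c) \<in> skew_cells (map f [0..<m]) []")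
      case True
      thus ?thesis using c0 ssytD(4)[OF S c0] by (auto simp: extT_def)
    next
      case False
      thus ?thesis using a c0 ssytD(1)[OF S c0] by (auto simp: extT_def)
    qed
  qed
qed

lemma ext_shp:
  assumes f: "f \<in> PiE {0..<m} (\<lambda>a. {lam ! Suc a..lam ! a})" and S: "S \<in> ssyt (map f [0..<m]) [] m"
  shows "restrict (shp (extT f S) lam m) {0..<m} = f"
proof (rule ext)
  fix a
  show "restrict (shp (extT f S) lam m) {0..<m} a = f a"
  proof (cases "a < m")
    case False thus ?thesis using f by (auto simp: PiE_def extensional_def)
  next
    case True
    have fa: "f a \<le> lam ! a" using f True by auto
    have "{c. 1 \<le> c \<and> c \<le> lam ! a \<and> extT f S (a, c) \<le> m} = {1..f a}"
    proof -
      have "c \<in> {1..f a}" if "c \<in> {c. 1 \<le> c \<and> c \<le> lam ! a \<and> extT f S (a, c) \<le> m}" for c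
        using that True len by (auto simp: extT_def cells_map cells_nil split: if_splits)
      moreover have "c \<in> {c. 1 \<le> c \<and> c \<le> lam ! a \<and> extT f S (a, c) \<le> m}" if c: "c \<in> {1..f a}" for c
      proof -
        have "(a, c) \<in> skew_cells (map f [0..<m]) []" using c True by (auto simp: cells_map)
        thus ?thesis using c fa ssytD(1)[OF S] by (auto simp: extT_def)
      qed
      ultimately show ?thesis by blast
    qed
    hence "shp (extT f S) lam m a = Max (insert 0 {1..f a})" by (simp add: shp_def)
    also have "\<dots> = f a" by (cases "f a") (auto intro!: Max_eqI)
    finally show ?thesis using True by simp
  qed
qed

lemma res_ext: 
  assumes S: "S \<in> ssyt (map f [0..<m]) [] m"
  shows "res (extT f S) = S"
proof
  fix x show "res (extT f S) x = S x"
    using ssytD(1,2)[OF S, of x] by (auto simp: res_def extT_def)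
qed

lemma ext_res:
  assumes T: "T \<in> ssyt lam [] (Suc m)" and f: "f = restrict (shp T lam m) {0..<m}"
  shows "extT f (res T) = T"
proof
  fix x
  have mf: "map f [0..<m] = map (shp T lam m) [0..<m]" using f by simp
  show "extT f (res T) x = T x"
    using res_cells[OF T, of x] ssytD(1,2)[OF T, of x]
    by (auto simp: res_def extT_def mf)
qed

lemma branching:
  "card (ssyt lam [] (Suc m)) =
     (\<Sum>f \<in> PiE {0..<m} (\<lambda>a. {lam ! Suc a..lam ! a}). card (ssyt (map f [0..<m]) [] m))"
proof -
  define F where "F = PiE {0..<m} (\<lambda>a. {lam ! Suc a..lam ! a})"
  define S where "S = ssyt lam [] (Suc m)"
  define \<phi> where "\<phi> T = restrict (shp T lam m) {0..<m}" for T
  have finF: "finite F" unfolding F_def by (intro finite_PiE) auto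
  have img: "\<phi> ` S \<subseteq> F"
    using shp_bounds unfolding F_def S_def \<phi>_def by auto
  have "card S = (\<Sum>x\<in>S. 1)" by simp
  also have "\<dots> = (\<Sum>f\<in>F. \<Sum>x\<in>{T \<in> S. \<phi> T = f}. 1)"
    by (rule sum.group[symmetric]) (use finite_ssyt finF img in \<open>auto simp: S_def\<close>)
  also have "\<dots> = (\<Sum>f\<in>F. card {T \<in> S. \<phi> T = f})" by simp
  also have "\<dots> = (\<Sum>f\<in>F. card (ssyt (map f [0..<m]) [] m))"
  proof (rule sum.cong[OF refl])
    fix f assume f: "f \<in> F"
    have "bij_betw res {T \<in> S. \<phi> T = f} (ssyt (map f [0..<m]) [] m)"
    proof (rule bij_betwI[where g="extT f"])
      show "res \<in> {T \<in> S. \<phi> T = f} \<rightarrow> ssyt (map f [0..<m]) [] m"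
        using res_ssyt unfolding S_def \<phi>_def by (auto simp: map_restrict_upt)
      show "extT f \<in> ssyt (map f [0..<m]) [] m \<rightarrow> {T \<in> S. \<phi> T = f}"
        using ext_ssyt ext_shp f unfolding S_def \<phi>_def F_def by auto
      show "extT f (res T) = T" if "T \<in> {T \<in> S. \<phi> T = f}" for T
        using ext_res that unfolding S_def \<phi>_def by auto
      show "res (extT f S') = S'" if "S' \<in> ssyt (map f [0..<m]) [] m" for S'
        using res_ext that by auto
    qed
    thus "card {T \<in> S. \<phi> T = f} = card (ssyt (map f [0..<m]) [] m)"
      by (rule bij_betw_same_card)
  qed
  finally show ?thesis by (simp add: S_def F_def)
qed

end


lemma ssyt_nil_nil: "ssyt [] [] 0 = {\<lambda>_. 0}"
  by (auto simp: ssyt_def skew_cells_def)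

theorem ssyt_card_det:
  assumes "length lam = n" "\<And>i. Suc i < length lam \<Longrightarrow> lam ! Suc i \<le> lam ! i"
  shows "real (card (ssyt lam [] n)) =
         det (mat n n (\<lambda>(a,b). (real (lam ! a) + real n - 1 - real a) gchoose (n - 1 - b)))"
  using assms
proof (induction n arbitrary: lam)
  case 0
  hence "lam = []" by simp
  thus ?case by (simp add: ssyt_nil_nil det_dim_zero[of _])
next
  case (Suc m)
  define F where "F = PiE {0..<m} (\<lambda>a. {lam ! Suc a..lam ! a})"
  have "real (card (ssyt lam [] (Suc m))) = (\<Sum>f\<in>F. real (card (ssyt (map f [0..<m]) [] m)))"
    using branching[OF Suc.prems] by (simp add: F_def)
  also have "\<dots> = (\<Sum>f\<in>F. det (mat m m (\<lambda>(a,b). (real (f a) + real m - 1 - real a) gchoose (m - 1 - b))))"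
  proof (rule sum.cong[OF refl])
    fix f assume f: "f \<in> F"
    have dec: "map f [0..<m] ! Suc i \<le> map f [0..<m] ! i" if "Suc i < length (map f [0..<m])" for i
    proof -
      have "f (Suc i) \<le> lam ! Suc i" "lam ! Suc i \<le> f i" using f that by (auto simp: F_def)
      thus ?thesis using that by simp
    qed
    have "real (card (ssyt (map f [0..<m]) [] m)) =
       det (mat m m (\<lambda>(a,b). (real (map f [0..<m] ! a) + real m - 1 - real a) gchoose (m - 1 - b)))"
      by (rule Suc.IH) (use dec in auto)
    also have "mat m m (\<lambda>(a,b). (real (map f [0..<m] ! a) + real m - 1 - real a) gchoose (m - 1 - b))
             = mat m m (\<lambda>(a,b). (real (f a) + real m - 1 - real a) gchoose (m - 1 - b))"
      by (rule eq_matI) auto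
    finally show "real (card (ssyt (map f [0..<m]) [] m)) =
       det (mat m m (\<lambda>(a,b). (real (f a) + real m - 1 - real a) gchoose (m - 1 - b)))" .
  qed
  also have "\<dots> = det (mat (Suc m) (Suc m) (\<lambda>(a,b). (real (lam ! a) + real m - real a) gchoose (m - b)))"
    unfolding F_def by (rule gt_sum) (use Suc.prems in auto)
  finally show ?case by (simp add: algebra_simps)
qed


lemma skew_cells_pad: "skew_cells (lam @ replicate k 0) [] = skew_cells lam []"
  by (auto simp: skew_cells_def part_def nth_append split: if_splits)

lemma ssyt_pad: "ssyt (lam @ replicate k 0) [] M = ssyt lam [] M"
  unfolding ssyt_def skew_cells_pad ..

lemma prod_diff_fact: "(\<Prod>a<b. real b - real a) = fact b"
proof -
  have "(\<Prod>a<b. real b - real a) = (\<Prod>k\<in>{1..b}. real k)"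
    by (rule prod.reindex_bij_witness[where i="\<lambda>k. b - k" and j="\<lambda>a. b - a"]) auto
  thus ?thesis by (simp add: fact_prod)
qed

lemma prod_diff_fact': "(\<Prod>a\<in>{d..<b}. real b - real a) = fact (b - d)"
proof -
  have "(\<Prod>a\<in>{d..<b}. real b - real a) = (\<Prod>k\<in>{1..b-d}. real k)"
    by (rule prod.reindex_bij_witness[where i="\<lambda>k. b - k" and j="\<lambda>a. b - a"]) auto
  thus ?thesis by (simp add: fact_prod)
qed

definition Pc :: "nat \<Rightarrow> nat \<Rightarrow> nat \<Rightarrow> real" where
  "Pc d M N = (\<Prod>b\<in>{d..<M}. \<Prod>a<d. real N + real b - real a)"

lemma rect_count:
  assumes "d \<le> M"
  shows "real (card (ssyt (replicate d N) [] M)) = sf d * sf (M - d) / sf M * Pc d M N"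
proof -
  define lam where "lam = replicate d N @ replicate (M - d) 0"
  have len: "length lam = M" using assms by (simp add: lam_def)
  have dec: "lam ! Suc i \<le> lam ! i" if "Suc i < length lam" for i
    using that by (auto simp: lam_def nth_append)
  define x where "x a = real (lam ! a) + real M - 1 - real a" for a
  have "real (card (ssyt (replicate d N) [] M)) = real (card (ssyt lam [] M))"
    by (simp add: lam_def ssyt_pad)
  also have "\<dots> = det (mat M M (\<lambda>(a,b). x a gchoose (M - 1 - b)))"
    unfolding x_def by (rule ssyt_card_det[OF len dec])
  also have "\<dots> = Vdm M x / sf M" by (rule vandermonde_gchoose)
  also have "Vdm M x = sf d * sf (M - d) * Pc d M N"
  proof -
    have xa: "x a = (if a < d then real N else 0) + real M - 1 - real a" if "a < M" for a
      using that by (simp add: x_def lam_def nth_append)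
    have "Vdm M x = (\<Prod>b<d. \<Prod>a<b. x a - x b) * (\<Prod>b\<in>{d..<M}. \<Prod>a<b. x a - x b)"
    proof -
      have e: "{..<M} = {..<d} \<union> {d..<M}" using assms by auto
      show ?thesis unfolding Vdm_def e by (rule prod.union_disjoint) auto
    qed
    also have "(\<Prod>b<d. \<Prod>a<b. x a - x b) = sf d"
      unfolding sf_def
    proof (rule prod.cong[OF refl])
      fix b assume b: "b \<in> {..<d}"
      have "(\<Prod>a<b. x a - x b) = (\<Prod>a<b. real b - real a)"
        using b assms by (intro prod.cong) (auto simp: xa)
      thus "(\<Prod>a<b. x a - x b) = fact b" by (simp add: prod_diff_fact)
    qed
    also have "(\<Prod>b\<in>{d..<M}. \<Prod>a<b. x a - x b) = (\<Prod>b\<in>{d..<M}. fact (b - d) * (\<Prod>a<d. real N + real b - real a))"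
    proof (rule prod.cong[OF refl])
      fix b assume b: "b \<in> {d..<M}"
      have e: "{..<b} = {..<d} \<union> {d..<b}" using b by auto
      have "(\<Prod>a<b. x a - x b) = (\<Prod>a<d. x a - x b) * (\<Prod>a\<in>{d..<b}. x a - x b)"
        unfolding e by (rule prod.union_disjoint) auto
      also have "(\<Prod>a<d. x a - x b) = (\<Prod>a<d. real N + real b - real a)"
        using b assms by (intro prod.cong) (auto simp: xa)
      also have "(\<Prod>a\<in>{d..<b}. x a - x b) = (\<Prod>a\<in>{d..<b}. real b - real a)"
        using b assms by (intro prod.cong) (auto simp: xa)
      also have "\<dots> = fact (b - d)" by (rule prod_diff_fact')
      finally show "(\<Prod>a<b. x a - x b) = fact (b - d) * (\<Prod>a<d. real N + real b - real a)" by simp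
    qed
    also have "\<dots> = (\<Prod>b\<in>{d..<M}. fact (b - d)) * Pc d M N"
      by (simp add: prod.distrib Pc_def)
    also have "(\<Prod>b\<in>{d..<M}. fact (b - d) :: real) = sf (M - d)"
      unfolding sf_def
      by (rule prod.reindex_bij_witness[where i="\<lambda>k. k + d" and j="\<lambda>b. b - d"]) (use assms in auto)
    finally show ?thesis by simp
  qed
  finally show ?thesis by simp
qed

lemma asymp_equiv_prod:
  fixes f g :: "'i \<Rightarrow> nat \<Rightarrow> real"
  assumes "finite A" "\<And>i. i \<in> A \<Longrightarrow> f i \<sim>[at_top] g i"
  shows "(\<lambda>x. \<Prod>i\<in>A. f i x) \<sim>[at_top] (\<lambda>x. \<Prod>i\<in>A. g i x)"
  using assms
proof (induction A rule: finite_induct)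
  case empty thus ?case by simp
next
  case (insert a A)
  have "(\<lambda>x. f a x * (\<Prod>i\<in>A. f i x)) \<sim>[at_top] (\<lambda>x. g a x * (\<Prod>i\<in>A. g i x))"
    by (rule asymp_equiv_mult) (use insert in auto)
  thus ?case using insert by simp
qed

lemma Pc_asymp: "(\<lambda>N. Pc d M N) \<sim>[at_top] (\<lambda>N. real N ^ (d * (M - d)))"
proof -
  have "(\<lambda>N. Pc d M N) \<sim>[at_top] (\<lambda>N. \<Prod>b\<in>{d..<M}. \<Prod>a<d. real N)"
    unfolding Pc_def
  proof (intro asymp_equiv_prod)
    fix b a :: nat
    show "(\<lambda>N. real N + real b - real a) \<sim>[at_top] (\<lambda>N. real N)" by real_asymp
  qed auto
  also have "(\<lambda>N. \<Prod>b\<in>{d..<M}. \<Prod>a<d. real N) = (\<lambda>N. real N ^ (d * (M - d)))"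
    by (simp add: power_mult mult.commute)
  finally show ?thesis .
qed


lemma cells_main:
  assumes "1 \<le> d"
  shows "(i, c) \<in> skew_cells (replicate d N @ [j]) [k] \<longleftrightarrow>
     (i < d \<and> (i = 0 \<longrightarrow> k < c) \<and> 0 < c \<and> c \<le> N) \<or> (i = d \<and> 0 < c \<and> c \<le> j)"
  using assms by (auto simp: skew_cells_def part_def nth_append less_Suc_eq)

lemma cells_rect: "(i, c) \<in> skew_cells (replicate d n) [] \<longleftrightarrow> i < d \<and> 0 < c \<and> c \<le> n"
  by (auto simp: cells_nil)

lemma rect_lower:
  assumes "b \<in> ssyt (replicate d n) [] M" "(i, c) \<in> skew_cells (replicate d n) []"
  shows "Suc i \<le> b (i, c)"
  by (rule ssyt_straight_lower[OF assms(1) _ assms(2)]) simp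

locale sqz =
  fixes d M j k :: nat
  assumes d1: "1 \<le> d" and dM: "d \<le> M"
begin

definition m0 where "m0 = max j k"

definition LC :: "(nat \<times> nat) set" where
  "LC = skew_cells (replicate d m0 @ [j]) [k]"

lemma LC_iff: "(i, c) \<in> LC \<longleftrightarrow> (i < d \<and> (i = 0 \<longrightarrow> k < c) \<and> 0 < c \<and> c \<le> m0) \<or> (i = d \<and> 0 < c \<and> c \<le> j)"
  unfolding LC_def by (rule cells_main[OF d1])

lemma LC_def': "LC = {(i, c). (i < d \<and> (i = 0 \<longrightarrow> k < c) \<and> 0 < c \<and> c \<le> m0) \<or> (i = d \<and> 0 < c \<and> c \<le> j)}"
  using LC_iff by auto

definition GV :: "(nat \<times> nat \<Rightarrow> nat) set" where
  "GV = {l \<in> ssyt (replicate d m0 @ [j]) [k] M. \<forall>i c. (i, c) \<in> LC \<and> i < d \<longrightarrow> l (i, c) \<le> Suc i}"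

lemma GV_alt: "GV = {l. (\<forall>x\<in>LC. l x \<in> {1..M}) \<and> (\<forall>x. x \<notin> LC \<longrightarrow> l x = 0) \<and>
            (\<forall>i c. (i, c) \<in> LC \<and> (i, c + 1) \<in> LC \<longrightarrow> l (i, c) \<le> l (i, c + 1)) \<and>
            (\<forall>i c. (i, c) \<in> LC \<and> (i + 1, c) \<in> LC \<longrightarrow> l (i, c) < l (i + 1, c)) \<and>
            (\<forall>i c. (i, c) \<in> LC \<and> i < d \<longrightarrow> l (i, c) \<le> Suc i)}"
  unfolding GV_def ssyt_def LC_def[symmetric] by blast

definition LS :: "(nat \<times> nat \<Rightarrow> nat) set" where
  "LS = {l. (\<forall>x. x \<notin> LC \<longrightarrow> l x = 0) \<and> (\<forall>x. l x \<le> M)}"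

definition leftp :: "(nat \<times> nat \<Rightarrow> nat) \<Rightarrow> (nat \<times> nat \<Rightarrow> nat)" where
  "leftp T = (\<lambda>(i, c). if c \<le> m0 then T (i, c) else 0)"

definition bulk :: "(nat \<times> nat \<Rightarrow> nat) \<Rightarrow> (nat \<times> nat \<Rightarrow> nat)" where
  "bulk T = (\<lambda>(i, c). if 0 < c then T (i, c + m0) else 0)"

definition comb :: "(nat \<times> nat \<Rightarrow> nat) \<Rightarrow> (nat \<times> nat \<Rightarrow> nat) \<Rightarrow> (nat \<times> nat \<Rightarrow> nat)" where
  "comb l b = (\<lambda>(i, c). if c \<le> m0 then l (i, c) else b (i, c - m0))"

abbreviation SS where "SS N \<equiv> ssyt (replicate d N @ [j]) [k] M"
abbreviation Rect where "Rect n \<equiv> ssyt (replicate d n) [] M"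

definition GoodRect where "GoodRect n = {b \<in> Rect n. \<forall>i<d. b (i, 1) = Suc i}"

lemma finite_LC: "finite LC"
  unfolding LC_def by (rule finite_skew_cells)

lemma finite_LS: "finite LS"
  unfolding LS_def by (rule finite_bounded_zero_funs[OF finite_LC])

lemma GV_sub_LS: "GV \<subseteq> LS"
proof
  fix l assume l: "l \<in> GV"
  show "l \<in> LS" unfolding LS_def
  proof (intro CollectI conjI allI impI)
    have ls: "l \<in> ssyt (replicate d m0 @ [j]) [k] M" using l by (simp add: GV_def)
    fix x show "x \<notin> LC \<Longrightarrow> l x = 0" using ssytD(2)[OF ls, of x] by (simp add: LC_def)
    show "l x \<le> M" using ssytD(1,2)[OF ls, of x] by (cases "x \<in> LC") (auto simp: LC_def)
  qed
qed

lemma finite_GV: "finite GV" using finite_subset[OF GV_sub_LS finite_LS] .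

lemma cellsN: "(i, c) \<in> skew_cells (replicate d N @ [j]) [k] \<longleftrightarrow>
     (i < d \<and> (i = 0 \<longrightarrow> k < c) \<and> 0 < c \<and> c \<le> N) \<or> (i = d \<and> 0 < c \<and> c \<le> j)"
  by (rule cells_main[OF d1])

lemma cellsN_LC:
  assumes "m0 \<le> N"
  shows "(i, c) \<in> LC \<longleftrightarrow> (i, c) \<in> skew_cells (replicate d N @ [j]) [k] \<and> c \<le> m0"
  using assms d1 unfolding cellsN LC_iff m0_def by auto

lemma comb_ssyt:
  assumes N: "m0 < N" and l: "l \<in> GV" and b: "b \<in> Rect (N - m0)"
  shows "comb l b \<in> SS N"
proof (rule ssytI)
  fix x assume x: "x \<in> skew_cells (replicate d N @ [j]) [k]"
  obtain i c where xe: "x = (i, c)" by force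
  show "comb l b x \<in> {1..M}"
  proof (cases "c \<le> m0")
    case True
    hence "(i, c) \<in> LC" using cellsN_LC[of N i c] N x xe by auto
    thus ?thesis using l True xe by (auto simp: GV_alt comb_def)
  next
    case False
    hence "(i, c - m0) \<in> skew_cells (replicate d (N - m0)) []"
      using x xe by (auto simp: cellsN cells_rect m0_def)
    thus ?thesis using ssytD(1)[OF b] False xe by (auto simp: comb_def)
  qed
next
  fix x assume x: "x \<notin> skew_cells (replicate d N @ [j]) [k]"
  obtain i c where xe: "x = (i, c)" by force
  show "comb l b x = 0"
  proof (cases "c \<le> m0")
    case True
    hence "(i, c) \<notin> LC" using cellsN_LC[of N i c] N x xe by auto
    thus ?thesis using l True xe by (auto simp: GV_alt comb_def)
  next
    case False
    hence "(i, c - m0) \<notin> skew_cells (replicate d (N - m0)) []"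
      using x xe N by (auto simp: cellsN cells_rect m0_def)
    thus ?thesis using ssytD(2)[OF b] False xe by (auto simp: comb_def)
  qed
next
  fix i c assume a: "(i, c) \<in> skew_cells (replicate d N @ [j]) [k]" "(i, c + 1) \<in> skew_cells (replicate d N @ [j]) [k]"
  show "comb l b (i, c) \<le> comb l b (i, c + 1)"
  proof (cases "c + 1 \<le> m0")
    case True
    hence "(i, c) \<in> LC" "(i, c + 1) \<in> LC" using cellsN_LC[of N] N a by auto
    thus ?thesis using l True by (auto simp: GV_alt comb_def)
  next
    case False
    show ?thesis
    proof (cases "c = m0")
      case True
      have "(i, c) \<in> LC" using cellsN_LC[of N] N a True by auto
      moreover have "i < d" using a True by (auto simp: cellsN m0_def)
      ultimately have "l (i, c) \<le> Suc i" using l by (auto simp: GV_alt)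
      moreover have "(i, 1) \<in> skew_cells (replicate d (N - m0)) []"
        using \<open>i < d\<close> N by (auto simp: cells_rect)
      hence "Suc i \<le> b (i, 1)" by (rule rect_lower[OF b])
      ultimately show ?thesis using True by (simp add: comb_def)
    next
      case False
      hence c: "m0 < c" using \<open>\<not> c + 1 \<le> m0\<close> by simp
      have "(i, c - m0) \<in> skew_cells (replicate d (N - m0)) []"
           "(i, c - m0 + 1) \<in> skew_cells (replicate d (N - m0)) []"
        using a c by (auto simp: cellsN cells_rect m0_def)
      hence "b (i, c - m0) \<le> b (i, c - m0 + 1)" by (rule ssytD(3)[OF b])
      moreover have "c + 1 - m0 = c - m0 + 1" using c by simp
      ultimately show ?thesis using c by (simp add: comb_def)
    qed
  qed
next
  fix i c assume a: "(i, c) \<in> skew_cells (replicate d N @ [j]) [k]" "(i + 1, c) \<in> skew_cells (replicate d N @ [j]) [k]"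
  show "comb l b (i, c) < comb l b (i + 1, c)"
  proof (cases "c \<le> m0")
    case True
    hence "(i, c) \<in> LC" "(i + 1, c) \<in> LC" using cellsN_LC[of N] N a by auto
    thus ?thesis using l True by (auto simp: GV_alt comb_def)
  next
    case False
    have "(i, c - m0) \<in> skew_cells (replicate d (N - m0)) []"
         "(i + 1, c - m0) \<in> skew_cells (replicate d (N - m0)) []"
      using a False by (auto simp: cellsN cells_rect m0_def)
    hence "b (i, c - m0) < b (i + 1, c - m0)" by (rule ssytD(4)[OF b])
    thus ?thesis using False by (simp add: comb_def)
  qed
qed

lemma leftp_comb:
  assumes l: "l \<in> LS" shows "leftp (comb l b) = l"
proof
  fix x :: "nat \<times> nat" obtain i c where xe: "x = (i, c)" by force
  show "leftp (comb l b) x = l x"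
  proof (cases "c \<le> m0")
    case False
    hence "(i, c) \<notin> LC" by (auto simp: LC_iff m0_def)
    thus ?thesis using l False xe by (auto simp: LS_def leftp_def comb_def)
  qed (use xe in \<open>auto simp: leftp_def comb_def\<close>)
qed

lemma bulk_comb: "b \<in> Rect n \<Longrightarrow> bulk (comb l b) = b"
proof -
  assume b: "b \<in> Rect n"
  show "bulk (comb l b) = b"
  proof
    fix x :: "nat \<times> nat" obtain i c where xe: "x = (i, c)" by force
    show "bulk (comb l b) x = b x"
      using ssytD(2)[OF b, of "(i, 0)"] xe by (auto simp: bulk_def comb_def cells_rect)
  qed
qed

lemma comb_split: "comb (leftp T) (bulk T) = T"
proof
  fix x :: "nat \<times> nat" obtain i c where xe: "x = (i, c)" by force
  show "comb (leftp T) (bulk T) x = T x" using xe by (auto simp: comb_def leftp_def bulk_def)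
qed

lemma leftp_LS:
  assumes N: "m0 \<le> N" and T: "T \<in> SS N"
  shows "leftp T \<in> LS"
  unfolding LS_def
proof (intro CollectI conjI allI impI)
  fix x :: "nat \<times> nat" obtain i c where xe: "x = (i, c)" by force
  show "x \<notin> LC \<Longrightarrow> leftp T x = 0"
    using ssytD(2)[OF T, of x] cellsN_LC[OF N, of i c] xe by (auto simp: leftp_def)
  show "leftp T x \<le> M"
    using ssytD(1,2)[OF T, of x] xe
    by (cases "x \<in> skew_cells (replicate d N @ [j]) [k]") (auto simp: leftp_def)
qed

lemma bulk_Rect:
  assumes N: "m0 \<le> N" and T: "T \<in> SS N"
  shows "bulk T \<in> Rect (N - m0)"
proof (rule ssytI)
  fix x assume x: "x \<in> skew_cells (replicate d (N - m0)) []"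
  obtain i c where xe: "x = (i, c)" by force
  have "(i, c + m0) \<in> skew_cells (replicate d N @ [j]) [k]"
    using x xe by (auto simp: cellsN cells_rect m0_def)
  thus "bulk T x \<in> {1..M}" using ssytD(1)[OF T] x xe by (auto simp: bulk_def cells_rect)
next
  fix x assume x: "x \<notin> skew_cells (replicate d (N - m0)) []"
  obtain i c where xe: "x = (i, c)" by force
  have "0 < c \<Longrightarrow> (i, c + m0) \<notin> skew_cells (replicate d N @ [j]) [k]"
    using x xe N by (auto simp: cellsN cells_rect m0_def)
  thus "bulk T x = 0" using ssytD(2)[OF T] xe by (auto simp: bulk_def)
next
  fix i c assume a: "(i, c) \<in> skew_cells (replicate d (N - m0)) []" "(i, c + 1) \<in> skew_cells (replicate d (N - m0)) []"
  have "(i, c + m0) \<in> skew_cells (replicate d N @ [j]) [k]" "(i, c + m0 + 1) \<in> skew_cells (replicate d N @ [j]) [k]"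
    using a by (auto simp: cellsN cells_rect m0_def)
  hence "T (i, c + m0) \<le> T (i, c + m0 + 1)" by (rule ssytD(3)[OF T])
  thus "bulk T (i, c) \<le> bulk T (i, c + 1)" using a by (auto simp: bulk_def cells_rect add_ac)
next
  fix i c assume a: "(i, c) \<in> skew_cells (replicate d (N - m0)) []" "(i + 1, c) \<in> skew_cells (replicate d (N - m0)) []"
  have "(i, c + m0) \<in> skew_cells (replicate d N @ [j]) [k]" "(i + 1, c + m0) \<in> skew_cells (replicate d N @ [j]) [k]"
    using a by (auto simp: cellsN cells_rect m0_def)
  hence "T (i, c + m0) < T (i + 1, c + m0)" by (rule ssytD(4)[OF T])
  thus "bulk T (i, c) < bulk T (i + 1, c)" using a by (auto simp: bulk_def cells_rect)
qed

lemma leftp_GV_or_bad: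
  assumes N: "m0 < N" and T: "T \<in> SS N"
  shows "leftp T \<in> GV \<or> bulk T \<notin> GoodRect (N - m0)"
proof (rule disjCI)
  assume nb: "\<not> bulk T \<notin> GoodRect (N - m0)"
  hence g: "\<And>i. i < d \<Longrightarrow> T (i, Suc m0) = Suc i" by (auto simp: GoodRect_def bulk_def)
  have cl: "(i, c) \<in> LC \<longleftrightarrow> (i, c) \<in> skew_cells (replicate d N @ [j]) [k] \<and> c \<le> m0" for i c
    using cellsN_LC[of N i c] N by simp
  show "leftp T \<in> GV" unfolding GV_alt
  proof (intro CollectI conjI ballI allI impI)
    fix x assume "x \<in> LC" thus "leftp T x \<in> {1..M}"
      using cl ssytD(1)[OF T, of x] by (cases x) (auto simp: leftp_def)
  next
    fix x assume "x \<notin> LC" thus "leftp T x = 0"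
      using cl ssytD(2)[OF T, of x] by (cases x) (auto simp: leftp_def)
  next
    fix i c assume "(i, c) \<in> LC \<and> (i, c + 1) \<in> LC" thus "leftp T (i, c) \<le> leftp T (i, c + 1)"
      using cl ssytD(3)[OF T, of i c] by (auto simp: leftp_def)
  next
    fix i c assume "(i, c) \<in> LC \<and> (i + 1, c) \<in> LC" thus "leftp T (i, c) < leftp T (i + 1, c)"
      using cl ssytD(4)[OF T, of i c] by (auto simp: leftp_def)
  next
    fix i c assume a: "(i, c) \<in> LC \<and> i < d"
    hence c1: "(i, c) \<in> skew_cells (replicate d N @ [j]) [k]" "c \<le> m0" using cl by auto
    have c2: "(i, Suc m0) \<in> skew_cells (replicate d N @ [j]) [k]"
      using a N by (auto simp: cellsN m0_def)
    have "T (i, c) \<le> T (i, Suc m0)" by (rule ssyt_row_mono[OF T c1(1) c2]) (use c1 in simp)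
    thus "leftp T (i, c) \<le> Suc i" using g a c1 by (simp add: leftp_def)
  qed
qed

definition shiftR :: "(nat \<times> nat \<Rightarrow> nat) \<Rightarrow> (nat \<times> nat \<Rightarrow> nat)" where
  "shiftR b = (\<lambda>(i, c). if c = 1 \<and> i < d then Suc i else if 2 \<le> c then b (i, c - 1) else 0)"

lemma shiftR_Good:
  assumes b: "b \<in> Rect n"
  shows "shiftR b \<in> GoodRect (Suc n)"
  unfolding GoodRect_def
proof (intro CollectI conjI allI impI)
  show "i < d \<Longrightarrow> shiftR b (i, 1) = Suc i" for i by (simp add: shiftR_def)
  show "shiftR b \<in> Rect (Suc n)"
  proof (rule ssytI)
    fix x assume x: "x \<in> skew_cells (replicate d (Suc n)) []"
    obtain i c where xe: "x = (i, c)" by force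
    show "shiftR b x \<in> {1..M}"
    proof (cases "c = 1")
      case True thus ?thesis using x xe dM by (auto simp: shiftR_def cells_rect)
    next
      case False
      hence "(i, c - 1) \<in> skew_cells (replicate d n) []" using x xe by (auto simp: cells_rect)
      thus ?thesis using ssytD(1)[OF b] False x xe by (auto simp: shiftR_def cells_rect)
    qed
  next
    fix x assume x: "x \<notin> skew_cells (replicate d (Suc n)) []"
    obtain i c where xe: "x = (i, c)" by force
    have "2 \<le> c \<Longrightarrow> (i, c - 1) \<notin> skew_cells (replicate d n) []" using x xe by (auto simp: cells_rect)
    thus "shiftR b x = 0" using ssytD(2)[OF b] x xe by (auto simp: shiftR_def cells_rect)
  next
    fix i c assume a: "(i, c) \<in> skew_cells (replicate d (Suc n)) []" "(i, c + 1) \<in> skew_cells (replicate d (Suc n)) []"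
    show "shiftR b (i, c) \<le> shiftR b (i, c + 1)"
    proof (cases "c = 1")
      case True
      have "(i, 1) \<in> skew_cells (replicate d n) []" using a True by (auto simp: cells_rect)
      from rect_lower[OF b this] show ?thesis using True a by (auto simp: shiftR_def cells_rect)
    next
      case False
      hence "(i, c - 1) \<in> skew_cells (replicate d n) []" "(i, c - 1 + 1) \<in> skew_cells (replicate d n) []"
        using a by (auto simp: cells_rect)
      from ssytD(3)[OF b this] show ?thesis using False a by (auto simp: shiftR_def cells_rect)
    qed
  next
    fix i c assume a: "(i, c) \<in> skew_cells (replicate d (Suc n)) []" "(i + 1, c) \<in> skew_cells (replicate d (Suc n)) []"
    show "shiftR b (i, c) < shiftR b (i + 1, c)"
    proof (cases "c = 1")
      case True thus ?thesis using a by (auto simp: shiftR_def cells_rect)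
    next
      case False
      hence "(i, c - 1) \<in> skew_cells (replicate d n) []" "(i + 1, c - 1) \<in> skew_cells (replicate d n) []"
        using a by (auto simp: cells_rect)
      from ssytD(4)[OF b this] show ?thesis using False a by (auto simp: shiftR_def cells_rect)
    qed
  qed
qed

lemma shiftR_inj: "inj_on shiftR (Rect n)"
proof (rule inj_onI)
  fix b b' assume b: "b \<in> Rect n" and b': "b' \<in> Rect n" and eq: "shiftR b = shiftR b'"
  show "b = b'"
  proof
    fix x :: "nat \<times> nat" obtain i c where xe: "x = (i, c)" by force
    show "b x = b' x"
    proof (cases "c = 0")
      case True thus ?thesis using ssytD(2)[OF b, of x] ssytD(2)[OF b', of x] xe by (auto simp: cells_rect)
    next
      case False
      have "shiftR b (i, c + 1) = shiftR b' (i, c + 1)" using eq by simp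
      thus ?thesis using False xe by (simp add: shiftR_def)
    qed
  qed
qed

lemma card_GoodRect: "card (Rect n) \<le> card (GoodRect (Suc n))"
proof -
  have "card (Rect n) = card (shiftR ` Rect n)" by (rule card_image[symmetric, OF shiftR_inj])
  also have "\<dots> \<le> card (GoodRect (Suc n))"
  proof (rule card_mono)
    show "finite (GoodRect (Suc n))" by (simp add: GoodRect_def finite_ssyt)
    show "shiftR ` Rect n \<subseteq> GoodRect (Suc n)" using shiftR_Good by blast
  qed
  finally show ?thesis .
qed

lemma lower_count:
  assumes N: "m0 < N"
  shows "card GV * card (Rect (N - m0)) \<le> card (SS N)"
proof -
  have inj: "inj_on (\<lambda>(l, b). comb l b) (GV \<times> Rect (N - m0))"
  proof (rule inj_onI, clarify)
    fix l b l' b' assume l: "l \<in> GV" "l' \<in> GV" and b: "b \<in> Rect (N - m0)" "b' \<in> Rect (N - m0)"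
      and eq: "comb l b = comb l' b'"
    have "l = l'" using leftp_comb[of l b] leftp_comb[of l' b'] l GV_sub_LS eq by auto
    moreover have "b = b'" using bulk_comb[OF b(1), of l] bulk_comb[OF b(2), of l'] eq by auto
    ultimately show "l = l' \<and> b = b'" by simp
  qed
  have "card GV * card (Rect (N - m0)) = card (GV \<times> Rect (N - m0))" by (simp add: card_cartesian_product)
  also have "\<dots> = card ((\<lambda>(l, b). comb l b) ` (GV \<times> Rect (N - m0)))" by (rule card_image[symmetric, OF inj])
  also have "\<dots> \<le> card (SS N)"
    by (rule card_mono[OF finite_ssyt]) (use comb_ssyt[OF N] in auto)
  finally show ?thesis .
qed

lemma upper_count:
  assumes N: "m0 < N"
  shows "card (SS N) \<le> card GV * card (Rect (N - m0)) + card LS * (card (Rect (N - m0)) - card (Rect (N - m0 - 1)))"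
proof -
  define n where "n = N - m0"
  have n: "n = Suc (n - 1)" using N by (simp add: n_def)
  define A where "A = (\<lambda>(l, b). comb l b) ` (GV \<times> Rect n)"
  define B where "B = (\<lambda>(l, b). comb l b) ` (LS \<times> (Rect n - GoodRect n))"
  have sub: "SS N \<subseteq> A \<union> B"
  proof
    fix T assume T: "T \<in> SS N"
    have eq: "T = (\<lambda>(l, b). comb l b) (leftp T, bulk T)" by (simp add: comb_split)
    have bR: "bulk T \<in> Rect n" using bulk_Rect[OF _ T] N by (simp add: n_def)
    show "T \<in> A \<union> B"
    proof (cases "leftp T \<in> GV")
      case True thus ?thesis using bR eq unfolding A_def by blast
    next
      case False
      hence "bulk T \<notin> GoodRect n" using leftp_GV_or_bad[OF N T] by (simp add: n_def)
      moreover have "leftp T \<in> LS" using leftp_LS[OF _ T] N by simp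
      ultimately show ?thesis using bR eq unfolding B_def by blast
    qed
  qed
  have GR: "GoodRect n \<subseteq> Rect n" by (auto simp: GoodRect_def)
  have "card (SS N) \<le> card (A \<union> B)"
    by (rule card_mono[OF _ sub]) (simp add: A_def B_def finite_GV finite_LS finite_ssyt)
  also have "\<dots> \<le> card A + card B" by (rule card_Un_le)
  also have "card A \<le> card GV * card (Rect n)"
    unfolding A_def using card_image_le[of "GV \<times> Rect n" "\<lambda>(l, b). comb l b"]
    by (simp add: card_cartesian_product finite_GV finite_ssyt)
  also have "card B \<le> card LS * card (Rect n - GoodRect n)"
    unfolding B_def using card_image_le[of "LS \<times> (Rect n - GoodRect n)" "\<lambda>(l, b). comb l b"]
    by (simp add: card_cartesian_product finite_LS finite_ssyt)
  also have "card (Rect n - GoodRect n) = card (Rect n) - card (GoodRect n)"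
    by (rule card_Diff_subset) (use GR finite_ssyt in \<open>auto simp: GoodRect_def\<close>)
  also have "\<dots> \<le> card (Rect n) - card (Rect (n - 1))"
    using card_GoodRect[of "n - 1"] n by simp
  finally show ?thesis by (simp add: n_def mult_le_mono)
qed

end


lemma cells_one: "(i, c) \<in> skew_cells [s] [] \<longleftrightarrow> i = 0 \<and> 0 < c \<and> c \<le> s"
  by (auto simp: cells_nil)

context sqz begin

definition build :: "nat \<Rightarrow> (nat \<times> nat \<Rightarrow> nat) \<Rightarrow> (nat \<times> nat \<Rightarrow> nat) \<Rightarrow> (nat \<times> nat \<Rightarrow> nat)" where
  "build r Q W = (\<lambda>(i, c). if (i, c) \<notin> LC then 0
     else if i = d then (if c \<le> r then d else W (0, c - r) + d)
     else if c \<le> k then (if c \<le> r then i else if i + Q (0, c - r) \<le> d then i else Suc i)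
     else Suc i)"

definition Params where
  "Params = Sigma {0..min j k} (\<lambda>r. ssyt [k - r] [] d \<times> ssyt [j - r] [] (M - d))"

lemma build_GV:
  assumes r: "r \<le> min j k" and Q: "Q \<in> ssyt [k - r] [] d" and W: "W \<in> ssyt [j - r] [] (M - d)"
  shows "build r Q W \<in> GV"
proof -
  have Wv: "1 \<le> W (0, c - r) \<and> W (0, c - r) \<le> M - d" if "r < c" "c \<le> j" for c
    using ssytD(1)[OF W, of "(0, c - r)"] that by (auto simp: cells_one)
  have Qv: "1 \<le> Q (0, c - r) \<and> Q (0, c - r) \<le> d" if "r < c" "c \<le> k" for c
    using ssytD(1)[OF Q, of "(0, c - r)"] that by (auto simp: cells_one)
  have Wm: "W (0, c - r) \<le> W (0, Suc c - r)" if "r < c" "Suc c \<le> j" for c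
    using ssytD(3)[OF W, of 0 "c - r"] that by (auto simp: cells_one Suc_diff_le)
  have Qm: "Q (0, c - r) \<le> Q (0, Suc c - r)" if "r < c" "Suc c \<le> k" for c
    using ssytD(3)[OF Q, of 0 "c - r"] that by (auto simp: cells_one Suc_diff_le)
  let ?b = "build r Q W"
  show ?thesis unfolding GV_alt
  proof (intro CollectI conjI ballI allI impI)
    fix x assume x: "x \<in> LC"
    obtain i c where xe: "x = (i, c)" by force
    show "?b x \<in> {1..M}"
    proof (cases "i = d")
      case True thus ?thesis using x xe Wv[of c] d1 dM by (auto simp: build_def LC_iff)
    next
      case False
      thus ?thesis using x xe Qv[of c] d1 dM by (auto simp: build_def LC_iff)
    qed
  next
    fix x assume "x \<notin> LC" thus "?b x = 0" by (cases x) (auto simp: build_def)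
  next
    fix i c assume a: "(i, c) \<in> LC \<and> (i, c + 1) \<in> LC"
    show "?b (i, c) \<le> ?b (i, c + 1)"
    proof (cases "i = d")
      case True
      thus ?thesis using a Wm[of c] r by (auto simp: build_def LC_iff)
    next
      case False
      thus ?thesis using a Qm[of c] r by (cases "r < c") (auto simp: build_def LC_iff)
    qed
  next
    fix i c assume a: "(i, c) \<in> LC \<and> (i + 1, c) \<in> LC"
    show "?b (i, c) < ?b (i + 1, c)"
    proof (cases "i + 1 = d")
      case True
      thus ?thesis using a Wv[of c] Qv[of c] r by (auto simp: build_def LC_iff)
    next
      case False
      thus ?thesis using a r by (auto simp: build_def LC_iff)
    qed
  next
    fix i c assume a: "(i, c) \<in> LC \<and> i < d"
    thus "?b (i, c) \<le> Suc i" by (auto simp: build_def LC_iff)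
  qed
qed

end


context sqz begin

lemma build_Q_detect:
  assumes rc: "r < c" "c \<le> k" and q: "1 \<le> q1" "q1 < q2" "q2 \<le> d"
    and Q1: "Q1 (0, c - r) = q1" and Q2: "Q2 (0, c - r) = q2"
  shows "build r Q1 W1 (d + 1 - q2, c) \<noteq> build r Q2 W2 (d + 1 - q2, c)"
proof -
  define i where "i = d + 1 - q2"
  have i: "1 \<le> i" "i < d" using q by (auto simp: i_def)
  have LCi: "(i, c) \<in> LC" using i rc by (auto simp: LC_iff m0_def)
  have "build r Q1 W1 (i, c) = i" using LCi i rc Q1 q by (auto simp: build_def i_def)
  moreover have "build r Q2 W2 (i, c) = Suc i" using LCi i rc Q2 q by (auto simp: build_def i_def)
  ultimately show ?thesis by (simp add: i_def)
qed

lemma build_inj: "inj_on (\<lambda>(r, Q, W). build r Q W) Params"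
proof (rule inj_onI)
  fix x y assume x: "x \<in> Params" and y: "y \<in> Params"
    and xy: "(\<lambda>(r, Q, W). build r Q W) x = (\<lambda>(r, Q, W). build r Q W) y"
  obtain r Q W where xe: "x = (r, Q, W)" by (cases x) auto
  obtain r' Q' W' where ye: "y = (r', Q', W')" by (cases y) auto
  have p: "(r, Q, W) \<in> Params" "(r', Q', W') \<in> Params" using x y xe ye by auto
  have eq: "build r Q W = build r' Q' W'" using xy xe ye by simp
  have r: "r \<le> min j k" "Q \<in> ssyt [k - r] [] d" "W \<in> ssyt [j - r] [] (M - d)" using p by (auto simp: Params_def)
  have r': "r' \<le> min j k" "Q' \<in> ssyt [k - r'] [] d" "W' \<in> ssyt [j - r'] [] (M - d)" using p by (auto simp: Params_def)
  have rr: "r = r'"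
  proof (rule ccontr)
    assume ne: "r \<noteq> r'"
    have key: "False" if a: "a < a'" "a \<le> min j k" "a' \<le> min j k" "Wa \<in> ssyt [j - a] [] (M - d)"
       "build a Qa Wa = build a' Qa' Wa'" for a a' Qa Wa Qa' Wa'
    proof -
      have LCd: "(d, Suc a) \<in> LC" using a d1 by (auto simp: LC_iff)
      have "1 \<le> Wa (0, Suc a - a)" using ssytD(1)[OF a(4), of "(0, 1)"] a by (auto simp: cells_one)
      hence "build a Qa Wa (d, Suc a) \<ge> Suc d" using LCd by (auto simp: build_def)
      moreover have "build a' Qa' Wa' (d, Suc a) = d" using LCd a by (auto simp: build_def)
      ultimately show False using a(5) by simp
    qed
    show False
    proof (cases "r < r'")
      case True show False using key[OF True r(1) r'(1) r(3) eq] by simp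
    next
      case False thus False using key[of r' r W' Q' Q W] ne r r' eq by simp
    qed
  qed
  have WW: "W = W'"
  proof
    fix x :: "nat \<times> nat" obtain i c where xe: "x = (i, c)" by force
    show "W x = W' x"
    proof (cases "(i, c) \<in> skew_cells [j - r] []")
      case True
      hence ic: "i = 0" "0 < c" "c \<le> j - r" by (auto simp: cells_one)
      have LCd: "(d, c + r) \<in> LC" using ic d1 by (auto simp: LC_iff)
      have "build r Q W (d, c + r) = W (0, c) + d" using LCd ic by (auto simp: build_def)
      moreover have "build r' Q' W' (d, c + r) = W' (0, c) + d" using LCd ic rr by (auto simp: build_def)
      ultimately show ?thesis using eq xe ic by simp
    next
      case False
      thus ?thesis using ssytD(2)[OF r(3)] ssytD(2)[OF r'(3)] rr xe by simp
    qed
  qed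
  have QQ: "Q = Q'"
  proof
    fix x :: "nat \<times> nat" obtain i c where xe: "x = (i, c)" by force
    show "Q x = Q' x"
    proof (cases "(i, c) \<in> skew_cells [k - r] []")
      case True
      hence ic: "i = 0" "0 < c" "c \<le> k - r" by (auto simp: cells_one)
      have v: "1 \<le> Q (0, c) \<and> Q (0, c) \<le> d" "1 \<le> Q' (0, c) \<and> Q' (0, c) \<le> d"
        using ssytD(1)[OF r(2), of "(0, c)"] ssytD(1)[OF r'(2), of "(0, c)"] ic rr by (auto simp: cells_one)
      have rc: "r < c + r" "c + r \<le> k" using ic by auto
      have e: "c + r - r = c" by simp
      show ?thesis
      proof (rule ccontr)
        assume ne: "Q x \<noteq> Q' x"
        show False
        proof (cases "Q (0, c) < Q' (0, c)")
          case True
          from build_Q_detect[OF rc _ True _, of Q Q' W W'] v eq rr show False by (simp add: e)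
        next
          case False
          hence "Q' (0, c) < Q (0, c)" using ne xe ic by simp
          from build_Q_detect[OF rc _ this _, of Q' Q W' W] v eq rr show False by (simp add: e)
        qed
      qed
    next
      case False
      thus ?thesis using ssytD(2)[OF r(2)] ssytD(2)[OF r'(2)] rr xe by simp
    qed
  qed
  from rr QQ WW show "x = y" by (simp add: xe ye)
qed

end


context sqz begin

context
  fixes l assumes l: "l \<in> GV"
begin

lemma lS: "l \<in> ssyt (replicate d m0 @ [j]) [k] M"
  using l by (simp add: GV_def)

lemma lbound: "(i, c) \<in> LC \<Longrightarrow> i < d \<Longrightarrow> l (i, c) \<le> Suc i"
  using l by (auto simp: GV_def)

lemma lval: "x \<in> LC \<Longrightarrow> l x \<in> {1..M}"
  using ssytD(1)[OF lS] by (simp add: LC_def)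

lemma lzero: "x \<notin> LC \<Longrightarrow> l x = 0"
  using ssytD(2)[OF lS] by (simp add: LC_def)

lemma lrow: "(i, c) \<in> LC \<Longrightarrow> (i, c + 1) \<in> LC \<Longrightarrow> l (i, c) \<le> l (i, c + 1)"
  using ssytD(3)[OF lS] by (simp add: LC_def)

lemma lcol: "(i, c) \<in> LC \<Longrightarrow> (i + 1, c) \<in> LC \<Longrightarrow> l (i, c) < l (i + 1, c)"
  using ssytD(4)[OF lS] by (simp add: LC_def)

lemma lcol': "(i, c) \<in> LC \<Longrightarrow> (Suc i, c) \<in> LC \<Longrightarrow> l (i, c) < l (Suc i, c)"
  using lcol by simp

lemma lrow_mono: "(i, c) \<in> LC \<Longrightarrow> (i, c') \<in> LC \<Longrightarrow> c \<le> c' \<Longrightarrow> l (i, c) \<le> l (i, c')"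
  using ssyt_row_mono[OF lS] by (simp add: LC_def)

lemma llow: "i < d \<Longrightarrow> (i, c) \<in> LC \<Longrightarrow> i \<le> l (i, c)"
proof (induction i)
  case 0 thus ?case by simp
next
  case (Suc i)
  show ?case
  proof (cases "(i, c) \<in> LC")
    case True
    thus ?thesis using Suc lcol'[OF True Suc.prems(2)] by simp
  next
    case False
    hence "i = 0" using Suc.prems by (auto simp: LC_iff)
    thus ?thesis using lval[OF Suc.prems(2)] by simp
  qed
qed

lemma llow': "i < d \<Longrightarrow> (i, c) \<in> LC \<Longrightarrow> k < c \<Longrightarrow> Suc i \<le> l (i, c)"
proof (induction i)
  case 0 thus ?case using lval[OF "0.prems"(2)] by simp
next
  case (Suc i)
  have "(i, c) \<in> LC" using Suc.prems by (auto simp: LC_iff)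
  thus ?case using Suc lcol'[OF \<open>(i, c) \<in> LC\<close> Suc.prems(2)] by simp
qed

lemma lrowd: "0 < c \<Longrightarrow> c \<le> j \<Longrightarrow> d \<le> l (d, c)"
proof -
  assume c: "0 < c" "c \<le> j"
  have Ld: "(d, c) \<in> LC" using c by (auto simp: LC_iff)
  show ?thesis
  proof (cases "(d - 1, c) \<in> LC")
    case True
    have "d - 1 \<le> l (d - 1, c)" using llow[OF _ True] d1 by simp
    moreover have "l (d - 1, c) < l (d - 1 + 1, c)" using lcol[OF True] Ld d1 by simp
    ultimately show ?thesis using d1 by simp
  next
    case False
    hence "d = 1" using c d1 by (auto simp: LC_iff m0_def)
    thus ?thesis using lval[OF Ld] by simp
  qed
qed

lemma lrowd': "0 < c \<Longrightarrow> c \<le> j \<Longrightarrow> k < c \<Longrightarrow> Suc d \<le> l (d, c)"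
proof -
  assume c: "0 < c" "c \<le> j" "k < c"
  have Ld: "(d, c) \<in> LC" using c by (auto simp: LC_iff)
  have L1: "(d - 1, c) \<in> LC" using c d1 by (auto simp: LC_iff m0_def)
  have "d \<le> l (d - 1, c)" using llow'[OF _ L1] d1 c by simp
  moreover have "l (d - 1, c) < l (d - 1 + 1, c)" using lcol[OF L1] Ld d1 by simp
  ultimately show ?thesis using d1 by simp
qed

lemma lchain:
  assumes c: "0 < c" "c \<le> j" "c \<le> k" and ld: "l (d, c) \<le> d"
  shows "1 \<le> i \<Longrightarrow> i \<le> d \<Longrightarrow> l (i, c) \<le> i"
proof (induction "d - i" arbitrary: i)
  case 0 thus ?case using ld by simp
next
  case (Suc t)
  have i: "i < d" using Suc by simp
  have L0: "(i, c) \<in> LC" "(i + 1, c) \<in> LC" using Suc.prems i c by (auto simp: LC_iff m0_def)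
  have "l (i + 1, c) \<le> i + 1" using Suc.hyps(1)[of "i + 1"] Suc.hyps(2) Suc.prems i by simp
  thus ?case using lcol[OF L0] by simp
qed

definition rr where "rr = Max (insert 0 {c. 1 \<le> c \<and> c \<le> j \<and> l (d, c) \<le> d})"

lemma rr_iff:
  assumes c: "1 \<le> c" "c \<le> j"
  shows "l (d, c) \<le> d \<longleftrightarrow> c \<le> rr"
proof -
  define A where "A = {c. 1 \<le> c \<and> c \<le> j \<and> l (d, c) \<le> d}"
  have finA: "finite A" by (rule finite_subset[of _ "{..j}"]) (auto simp: A_def)
  show ?thesis
  proof
    assume "l (d, c) \<le> d"
    hence "c \<in> A" using c by (simp add: A_def)
    thus "c \<le> rr" unfolding rr_def A_def[symmetric] using finA by simp
  next
    assume le: "c \<le> rr"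
    show "l (d, c) \<le> d"
    proof (cases "A = {}")
      case True
      hence "rr = 0" unfolding rr_def A_def[symmetric] by simp
      with le c show ?thesis by simp
    next
      case False
      have "Max (insert 0 A) = Max A" using False finA by (simp add: max_def)
      moreover have "Max A \<in> A" using finA False by (rule Max_in)
      ultimately have s: "rr \<in> A" unfolding rr_def A_def[symmetric] by simp
      hence "l (d, c) \<le> l (d, rr)"
        using le c by (intro lrow_mono) (auto simp: A_def LC_iff)
      thus ?thesis using s by (simp add: A_def)
    qed
  qed
qed

lemma rr_le: "rr \<le> min j k"
proof -
  define A where "A = {c. 1 \<le> c \<and> c \<le> j \<and> l (d, c) \<le> d}"
  have finA: "finite A" by (rule finite_subset[of _ "{..j}"]) (auto simp: A_def)
  have "rr \<le> j" unfolding rr_def A_def[symmetric] using finA by (subst Max_le_iff) (auto simp: A_def)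
  moreover have "rr \<le> k"
  proof (rule ccontr)
    assume "\<not> rr \<le> k"
    hence "1 \<le> rr" by simp
    hence "l (d, rr) \<le> d" using rr_iff[of rr] \<open>rr \<le> j\<close> by simp
    moreover have "Suc d \<le> l (d, rr)" using lrowd'[of rr] \<open>rr \<le> j\<close> \<open>\<not> rr \<le> k\<close> by simp
    ultimately show False by simp
  qed
  ultimately show ?thesis by simp
qed

definition WW :: "nat \<times> nat \<Rightarrow> nat" where "WW = (\<lambda>(i, c). if i = 0 \<and> 0 < c \<and> c \<le> j - rr then l (d, c + rr) - d else 0)"

definition ss where "ss c = Min (insert d {i. 1 \<le> i \<and> i < d \<and> l (i, c) = Suc i})"

definition QQ :: "nat \<times> nat \<Rightarrow> nat" where "QQ = (\<lambda>(i, c). if i = 0 \<and> 0 < c \<and> c \<le> k - rr then d + 1 - ss (c + rr) else 0)"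

lemma ss_bounds: "1 \<le> ss c" "ss c \<le> d"
proof -
  define S where "S = {i. 1 \<le> i \<and> i < d \<and> l (i, c) = Suc i}"
  have finS: "finite S" by (rule finite_subset[of _ "{..d}"]) (auto simp: S_def)
  show "ss c \<le> d" unfolding ss_def S_def[symmetric] using finS by simp
  show "1 \<le> ss c" unfolding ss_def S_def[symmetric] using finS d1
    by (subst Min_ge_iff) (auto simp: S_def)
qed

lemma ss_struct:
  assumes c: "0 < c" "c \<le> k" and i: "1 \<le> i" "i < d"
  shows "l (i, c) = (if i < ss c then i else Suc i)"
proof -
  define S where "S = {i. 1 \<le> i \<and> i < d \<and> l (i, c) = Suc i}"
  have finS: "finite S" by (rule finite_subset[of _ "{..d}"]) (auto simp: S_def)
  have Li: "(i, c) \<in> LC" using c i by (auto simp: LC_iff m0_def)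
  have lo: "i \<le> l (i, c)" by (rule llow[OF i(2) Li])
  have hi: "l (i, c) \<le> Suc i" by (rule lbound[OF Li i(2)])
  show ?thesis
  proof (cases "i < ss c")
    case True
    have "i \<notin> S"
    proof
      assume "i \<in> S"
      hence "ss c \<le> i" unfolding ss_def S_def[symmetric] using finS by simp
      thus False using True by simp
    qed
    hence "l (i, c) \<noteq> Suc i" using i by (simp add: S_def)
    thus ?thesis using True lo hi by simp
  next
    case False
    have "ss c \<in> insert d S" unfolding ss_def S_def[symmetric] using finS by (intro Min_in) auto
    hence sS: "ss c \<in> S" using False i by auto
    have "l (ss c + t, c) = Suc (ss c + t)" if "ss c + t < d" for t
      using that
    proof (induction t)
      case 0 thus ?case using sS by (simp add: S_def)
    next
      case (Suc t)
      have L: "(ss c + t, c) \<in> LC" "(ss c + t + 1, c) \<in> LC" using Suc.prems sS c by (auto simp: LC_iff m0_def S_def)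
      have "l (ss c + t, c) < l (ss c + t + 1, c)" by (rule lcol[OF L])
      moreover have "l (ss c + t + 1, c) \<le> Suc (ss c + t + 1)" using lbound[OF L(2)] Suc.prems by simp
      ultimately show ?case using Suc by simp
    qed
    from this[of "i - ss c"] False i show ?thesis by simp
  qed
qed

lemma WW_ssyt: "WW \<in> ssyt [j - rr] [] (M - d)"
proof (rule ssytI)
  fix x assume x: "x \<in> skew_cells [j - rr] []"
  obtain i c where xe: "x = (i, c)" by force
  have ic: "i = 0" "0 < c" "c \<le> j - rr" using x xe by (auto simp: cells_one)
  have Ld: "(d, c + rr) \<in> LC" using ic by (auto simp: LC_iff)
  have "\<not> l (d, c + rr) \<le> d" using rr_iff[of "c + rr"] ic by simp
  thus "WW x \<in> {1..M - d}" using lval[OF Ld] xe ic by (auto simp: WW_def)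
next
  fix x assume "x \<notin> skew_cells [j - rr] []" thus "WW x = 0" by (cases x) (auto simp: WW_def cells_one)
next
  fix i c assume a: "(i, c) \<in> skew_cells [j - rr] []" "(i, c + 1) \<in> skew_cells [j - rr] []"
  have L: "(d, c + rr) \<in> LC" "(d, c + rr + 1) \<in> LC" using a by (auto simp: cells_one LC_iff)
  have "l (d, c + rr) \<le> l (d, c + rr + 1)" by (rule lrow[OF L])
  thus "WW (i, c) \<le> WW (i, c + 1)" using a by (auto simp: WW_def cells_one add_ac)
next
  fix i c assume "(i, c) \<in> skew_cells [j - rr] []" "(i + 1, c) \<in> skew_cells [j - rr] []"
  thus "WW (i, c) < WW (i + 1, c)" by (auto simp: cells_one)
qed

lemma ss_mono:
  assumes c: "0 < c" "c + 1 \<le> k"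
  shows "ss (c + 1) \<le> ss c"
proof (cases "ss c = d")
  case True thus ?thesis using ss_bounds by simp
next
  case False
  hence lt: "ss c < d" using ss_bounds(2)[of c] by simp
  have "l (ss c, c) = Suc (ss c)" using ss_struct[OF c(1) _ ss_bounds(1) lt] c by simp
  moreover have L: "(ss c, c) \<in> LC" "(ss c, c + 1) \<in> LC" using c lt ss_bounds(1)[of c] by (auto simp: LC_iff m0_def)
  ultimately have "Suc (ss c) \<le> l (ss c, c + 1)" using lrow[OF L] by simp
  moreover have "l (ss c, c + 1) \<le> Suc (ss c)" using lbound[OF L(2) lt] .
  ultimately have "l (ss c, c + 1) = Suc (ss c)" by simp
  hence "\<not> ss c < ss (c + 1)" using ss_struct[of "c + 1" "ss c"] c lt ss_bounds(1)[of c] by auto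
  thus ?thesis by simp
qed

lemma QQ_ssyt: "QQ \<in> ssyt [k - rr] [] d"
proof (rule ssytI)
  fix x assume x: "x \<in> skew_cells [k - rr] []"
  thus "QQ x \<in> {1..d}" using ss_bounds[of "snd x + rr"] by (cases x) (auto simp: QQ_def cells_one)
next
  fix x assume "x \<notin> skew_cells [k - rr] []" thus "QQ x = 0" by (cases x) (auto simp: QQ_def cells_one)
next
  fix i c assume a: "(i, c) \<in> skew_cells [k - rr] []" "(i, c + 1) \<in> skew_cells [k - rr] []"
  have "ss (c + rr + 1) \<le> ss (c + rr)" by (rule ss_mono) (use a in \<open>auto simp: cells_one\<close>)
  thus "QQ (i, c) \<le> QQ (i, c + 1)" using a by (auto simp: QQ_def cells_one add_ac)
next
  fix i c assume "(i, c) \<in> skew_cells [k - rr] []" "(i + 1, c) \<in> skew_cells [k - rr] []"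
  thus "QQ (i, c) < QQ (i + 1, c)" by (auto simp: cells_one)
qed

lemma build_eq: "build rr QQ WW = l"
proof
  fix x :: "nat \<times> nat" obtain i c where xe: "x = (i, c)" by force
  have rk: "rr \<le> j" "rr \<le> k" using rr_le by auto
  show "build rr QQ WW x = l x"
  proof (cases "(i, c) \<in> LC")
    case False thus ?thesis using lzero[OF False] xe by (simp add: build_def)
  next
    case L: True
    show ?thesis
    proof (cases "i = d")
      case True
      have c: "0 < c" "c \<le> j" using L True d1 by (auto simp: LC_iff)
      show ?thesis
      proof (cases "c \<le> rr")
        case True
        have "l (d, c) \<le> d" using rr_iff[of c] c True by simp
        thus ?thesis using lrowd[OF c] True \<open>i = d\<close> xe L by (simp add: build_def)
      next
        case False
        have "\<not> l (d, c) \<le> d" using rr_iff[of c] c False by simp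
        thus ?thesis using False \<open>i = d\<close> xe L c by (simp add: build_def WW_def)
      qed
    next
      case nd: False
      hence id: "i < d" using L by (auto simp: LC_iff)
      show ?thesis
      proof (cases "c \<le> k")
        case True
        have c: "0 < c" "1 \<le> i" using L True id by (auto simp: LC_iff)
        show ?thesis
        proof (cases "c \<le> rr")
          case True
          have "l (d, c) \<le> d" using rr_iff[of c] c True rk by simp
          hence "l (i, c) \<le> i" using lchain[of c i] c True rk id by simp
          moreover have "i \<le> l (i, c)" by (rule llow[OF id L])
          ultimately show ?thesis using True \<open>c \<le> k\<close> nd xe L by (simp add: build_def)
        next
          case False
          have e: "c - rr + rr = c" using False by simp
          have q1: "QQ (0, c - rr) = d + 1 - ss c" using False \<open>c \<le> k\<close> by (simp add: QQ_def e)
          have q2: "(i + (d + 1 - ss c) \<le> d) = (i < ss c)" using ss_bounds[of c] by auto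
          have q: "(i + QQ (0, c - rr) \<le> d) = (i < ss c)" unfolding q1 by (rule q2)
          have b: "build rr QQ WW (i, c) = (if i + QQ (0, c - rr) \<le> d then i else Suc i)"
            using False \<open>c \<le> k\<close> nd L by (simp add: build_def)
          show ?thesis unfolding xe using b q ss_struct[OF c(1) \<open>c \<le> k\<close> c(2) id] by simp
        qed
      next
        case False
        have "l (i, c) = Suc i" using llow'[OF id L] lbound[OF L id] False by simp
        thus ?thesis using False nd xe L by (simp add: build_def)
      qed
    qed
  qed
qed

end

lemma GV_eq: "GV = (\<lambda>(r, Q, W). build r Q W) ` Params"
proof
  show "(\<lambda>(r, Q, W). build r Q W) ` Params \<subseteq> GV"
    using build_GV by (auto simp: Params_def)
  show "GV \<subseteq> (\<lambda>(r, Q, W). build r Q W) ` Params"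
  proof
    fix l assume l: "l \<in> GV"
    have "(rr l, QQ l, WW l) \<in> Params"
      using rr_le[OF l] QQ_ssyt[OF l] WW_ssyt[OF l] by (simp add: Params_def)
    moreover have "l = build (rr l) (QQ l) (WW l)" using build_eq[OF l] by simp
    ultimately show "l \<in> (\<lambda>(r, Q, W). build r Q W) ` Params" by force
  qed
qed

lemma card_GV: "card GV = (\<Sum>r = 0..min j k. card (ssyt [k - r] [] d) * card (ssyt [j - r] [] (M - d)))"
proof -
  have "card GV = card Params" unfolding GV_eq by (rule card_image[OF build_inj])
  also have "\<dots> = (\<Sum>r = 0..min j k. card (ssyt [k - r] [] d \<times> ssyt [j - r] [] (M - d)))"
    unfolding Params_def by (rule card_SigmaI) (auto simp: finite_ssyt)
  also have "\<dots> = (\<Sum>r = 0..min j k. card (ssyt [k - r] [] d) * card (ssyt [j - r] [] (M - d)))"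
    by (simp add: card_cartesian_product)
  finally show ?thesis .
qed

end


lemma Pc_shift_asymp: "(\<lambda>N. Pc d M (N - t)) \<sim>[at_top] (\<lambda>N. real N ^ (d * (M - d)))"
proof -
  have "(\<lambda>N. Pc d M (N - t)) \<sim>[at_top] (\<lambda>N. \<Prod>b\<in>{d..<M}. \<Prod>a<d. real N)"
    unfolding Pc_def
  proof (intro asymp_equiv_prod)
    fix b a :: nat
    have "(\<lambda>N. real N - real t + real b - real a) \<sim>[at_top] (\<lambda>N. real N)" by real_asymp
    moreover have "eventually (\<lambda>N. real N - real t + real b - real a = real (N - t) + real b - real a) at_top"
      using eventually_ge_at_top[of t] by eventually_elim simp
    ultimately show "(\<lambda>N. real (N - t) + real b - real a) \<sim>[at_top] (\<lambda>N. real N)"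
      by (rule asymp_equiv_transfer) simp
  qed auto
  also have "(\<lambda>N. \<Prod>b\<in>{d..<M}. \<Prod>a<d. real N) = (\<lambda>N. real N ^ (d * (M - d)))"
    by (simp add: power_mult mult.commute)
  finally show ?thesis .
qed

lemma squeeze_asymp:
  fixes f :: "nat \<Rightarrow> real" and c0 K C :: real and s :: nat
  assumes C: "C \<noteq> 0" and c0: "c0 \<noteq> 0"
    and ev: "eventually (\<lambda>N. c0 * (C * Pc d M (N - s)) \<le> f N \<and>
               f N \<le> c0 * (C * Pc d M (N - s)) + K * (C * Pc d M (N - s) - C * Pc d M (N - s - 1))) at_top"
  shows "f \<sim>[at_top] (\<lambda>N. real N ^ (d * (M - d)) * C * c0)"
proof -
  define g where "g = (\<lambda>N. real N ^ (d * (M - d)) * C * c0)"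
  define p where "p = (\<lambda>N::nat. real N ^ (d * (M - d)))"
  have A: "(\<lambda>N. Pc d M (N - s)) \<sim>[at_top] p" unfolding p_def by (rule Pc_shift_asymp)
  have B: "(\<lambda>N. Pc d M (N - s - 1)) \<sim>[at_top] p"
    unfolding p_def using Pc_shift_asymp[of d M "s + 1"] by (simp add: diff_diff_add)
  have l: "(\<lambda>N. c0 * (C * Pc d M (N - s))) \<sim>[at_top] g"
  proof -
    have "(\<lambda>N. (c0 * C) * Pc d M (N - s)) \<sim>[at_top] (\<lambda>N. (c0 * C) * p N)"
      by (rule asymp_equiv_mult[OF asymp_equiv_refl A])
    thus ?thesis unfolding g_def p_def by (simp add: mult_ac)
  qed
  have o1: "(\<lambda>N. Pc d M (N - s) - p N) \<in> o[at_top](p)" by (rule asymp_equiv_imp_diff_smallo[OF A])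
  have o2: "(\<lambda>N. Pc d M (N - s - 1) - p N) \<in> o[at_top](p)" by (rule asymp_equiv_imp_diff_smallo[OF B])
  have "(\<lambda>N. (Pc d M (N - s) - p N) - (Pc d M (N - s - 1) - p N)) \<in> o[at_top](p)"
    by (rule sum_in_smallo(2)[OF o1 o2])
  hence o3: "(\<lambda>N. Pc d M (N - s) - Pc d M (N - s - 1)) \<in> o[at_top](p)" by simp
  have o4: "(\<lambda>N. (K * C) * (Pc d M (N - s) - Pc d M (N - s - 1))) \<in> o[at_top](p)"
    using o3 by (cases "K * C = 0") simp_all
  have "g = (\<lambda>N. p N * (C * c0))" by (simp add: g_def p_def mult_ac)
  hence og: "o[at_top](g) = o[at_top](p)" using C c0 by simp
  have h: "(\<lambda>N. K * (C * Pc d M (N - s) - C * Pc d M (N - s - 1))) \<in> o[at_top](g)"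
    unfolding og using o4 by (simp add: algebra_simps)
  have u: "(\<lambda>N. c0 * (C * Pc d M (N - s)) + K * (C * Pc d M (N - s) - C * Pc d M (N - s - 1))) \<sim>[at_top] g"
    using asymp_equiv_add_right[OF h] l by simp
  show ?thesis unfolding g_def[symmetric]
    by (rule asymp_equiv_sandwich_real[OF l u]) (use ev in \<open>auto elim!: eventually_mono\<close>)
qed


lemma fact_prod_shift:
  assumes "1 \<le> n"
  shows "fact s * (\<Prod>b\<in>{1..<n}. real s + real b) = fact (s + n - 1)"
  using assms
proof (induction n rule: dec_induct)
  case base thus ?case by simp
next
  case (step n)
  have "{1..<Suc n} = insert n {1..<n}" using step by auto
  hence "(\<Prod>b\<in>{1..<Suc n}. real s + real b) = (real s + real n) * (\<Prod>b\<in>{1..<n}. real s + real b)"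
    by simp
  hence "fact s * (\<Prod>b\<in>{1..<Suc n}. real s + real b) = (real s + real n) * fact (s + n - 1)"
    using step.IH by (simp add: mult_ac)
  also have "\<dots> = fact (s + Suc n - 1)"
  proof -
    have e: "s + Suc n - 1 = Suc (s + n - 1)" using step.hyps by simp
    have e2: "real (Suc (s + n - 1)) = real s + real n" using step.hyps by simp
    show ?thesis unfolding e fact_Suc e2 by simp
  qed
  finally show ?case .
qed

lemma one_row_card_nat:
  assumes "1 \<le> n \<or> s = 0"
  shows "card (ssyt [s] [] n) = (n + s - 1) choose s"
proof (cases "s = 0")
  case True
  have e: "skew_cells [s] [] = {}" using True by (auto simp: skew_cells_def part_def)
  have "ssyt [s] [] n = {\<lambda>_. 0}" unfolding ssyt_def e by (auto simp: fun_eq_iff)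
  thus ?thesis using True by simp
next
  case False
  hence n: "1 \<le> n" using assms by simp
  have "real (card (ssyt [s] [] n)) = sf 1 * sf (n - 1) / sf n * Pc 1 n s"
    using rect_count[of 1 n s] n by simp
  also have "sf n = sf (n - 1) * fact (n - 1)"
  proof -
    obtain m where m: "n = Suc m" using n by (cases n) auto
    show ?thesis by (simp add: m sf_def)
  qed
  also have "sf 1 = 1" by (simp add: sf_def)
  also have "Pc 1 n s = (\<Prod>b\<in>{1..<n}. real s + real b)" by (simp add: Pc_def)
  also have "1 * sf (n - 1) / (sf (n - 1) * fact (n - 1)) * (\<Prod>b\<in>{1..<n}. real s + real b)
           = fact (s + n - 1) / (fact s * fact (n - 1))"
  proof -
    have "sf (n - 1) \<noteq> 0" by (simp add: sf_def)
    thus ?thesis using fact_prod_shift[OF n, of s, symmetric] by (simp add: field_simps)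
  qed
  also have "\<dots> = real ((s + n - 1) choose s)"
  proof -
    have le: "s \<le> s + n - 1" using n by simp
    have "real ((s + n - 1) choose s) = fact (s + n - 1) / (fact s * fact (s + n - 1 - s))"
      by (rule binomial_fact[OF le])
    moreover have "s + n - 1 - s = n - 1" by simp
    ultimately show ?thesis by simp
  qed
  finally show ?thesis by (simp add: add_ac)
qed

lemma one_row_card_real:
  assumes "1 \<le> n \<or> s = 0"
  shows "real (card (ssyt [s] [] n)) = (real n + real s - 1) gchoose s"
proof (cases "s = 0")
  case True thus ?thesis using one_row_card_nat[OF assms] by simp
next
  case False
  hence n: "1 \<le> n" using assms by simp
  have "real (card (ssyt [s] [] n)) = real ((n + s - 1) choose s)" by (simp add: one_row_card_nat[OF assms])
  also have "\<dots> = real (n + s - 1) gchoose s" by (simp add: binomial_gbinomial of_nat_gbinomial)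
  also have "real (n + s - 1) = real n + real s - 1" using n by simp
  finally show ?thesis .
qed

theorem mainTheorem6:
  fixes d M j k :: nat
  assumes "d \<ge> 1"
    and "M > d \<or> (j = 0 \<and> M \<ge> d)"
  shows "(\<lambda>N. real (skew_schur_ones (replicate d N @ [j]) [k] M)) \<sim>[at_top]
         (\<lambda>N. real N ^ (d * (M - d)) *
              (barnesG_nat (d + 1) * barnesG_nat (M - d + 1) / barnesG_nat (M + 1)) *
              (\<Sum>r = 0..min j k.
                 ((real M - real d + real j - real r - 1) gchoose (j - r)) *
                 ((real d + real k - real r - 1) gchoose (k - r))))"
proof -
  have d1: "1 \<le> d" and dM: "d \<le> M" using assms by auto
  interpret sqz d M j k by unfold_locales (use d1 dM in auto)
  define c0 where "c0 = real (card GV)"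
  define C where "C = sf d * sf (M - d) / sf M"
  define K where "K = real (card LS)"
  have sf_pos: "0 < sf n" for n unfolding sf_def by (intro prod_pos) auto
  have Ceq: "barnesG_nat (d + 1) * barnesG_nat (M - d + 1) / barnesG_nat (M + 1) = C"
    by (simp add: barnesG_nat_def C_def sf_def)
  have C0: "C \<noteq> 0" using sf_pos[of d] sf_pos[of "M - d"] sf_pos[of M] by (simp add: C_def)
  have condW: "1 \<le> M - d \<or> j - r = 0" if "r \<le> min j k" for r using assms that by auto
  have cardGV: "card GV = (\<Sum>r = 0..min j k. ((d + (k - r) - 1) choose (k - r)) * ((M - d + (j - r) - 1) choose (j - r)))"
    unfolding card_GV
    by (rule sum.cong[OF refl]) (use d1 condW in \<open>simp add: one_row_card_nat\<close>)
  have sumeq: "(\<Sum>r = 0..min j k. ((real M - real d + real j - real r - 1) gchoose (j - r)) *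
                 ((real d + real k - real r - 1) gchoose (k - r))) = c0"
  proof -
    have "c0 = (\<Sum>r = 0..min j k. real (card (ssyt [k - r] [] d)) * real (card (ssyt [j - r] [] (M - d))))"
      unfolding c0_def card_GV by simp
    also have "\<dots> = (\<Sum>r = 0..min j k. ((real M - real d + real j - real r - 1) gchoose (j - r)) *
                 ((real d + real k - real r - 1) gchoose (k - r)))"
    proof (rule sum.cong[OF refl])
      fix r assume r: "r \<in> {0..min j k}"
      have "real (card (ssyt [k - r] [] d)) = (real d + real (k - r) - 1) gchoose (k - r)"
        by (rule one_row_card_real) (use d1 in simp)
      also have "real d + real (k - r) - 1 = real d + real k - real r - 1" using r by simp
      finally have q: "real (card (ssyt [k - r] [] d)) = (real d + real k - real r - 1) gchoose (k - r)" .
      have "real (card (ssyt [j - r] [] (M - d))) = (real (M - d) + real (j - r) - 1) gchoose (j - r)"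
        by (rule one_row_card_real) (use condW r in simp)
      also have "real (M - d) + real (j - r) - 1 = real M - real d + real j - real r - 1" using r dM by simp
      finally have w: "real (card (ssyt [j - r] [] (M - d))) = (real M - real d + real j - real r - 1) gchoose (j - r)" .
      show "real (card (ssyt [k - r] [] d)) * real (card (ssyt [j - r] [] (M - d))) =
         ((real M - real d + real j - real r - 1) gchoose (j - r)) * ((real d + real k - real r - 1) gchoose (k - r))"
        unfolding q w by simp
    qed
    finally show ?thesis by simp
  qed
  have c0pos: "c0 \<noteq> 0"
  proof -
    have "0 < ((d + (k - 0) - 1) choose (k - 0)) * ((M - d + (j - 0) - 1) choose (j - 0))"
      using d1 condW[of 0] by (auto intro!: zero_less_binomial)
    also have "\<dots> \<le> card GV" unfolding cardGV
      by (rule member_le_sum[of 0 "{0..min j k}" "\<lambda>r. ((d + (k - r) - 1) choose (k - r)) * ((M - d + (j - r) - 1) choose (j - r))"]) auto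
    finally show ?thesis by (simp add: c0_def)
  qed
  have R: "real (card (Rect n)) = C * Pc d M n" for n using rect_count[OF dM, of n] by (simp add: C_def)
  have ev: "eventually (\<lambda>N. c0 * (C * Pc d M (N - m0)) \<le> real (card (SS N)) \<and>
               real (card (SS N)) \<le> c0 * (C * Pc d M (N - m0)) + K * (C * Pc d M (N - m0) - C * Pc d M (N - m0 - 1))) at_top"
    using eventually_gt_at_top[of m0]
  proof eventually_elim
    case (elim N)
    have lo: "card GV * card (Rect (N - m0)) \<le> card (SS N)" by (rule lower_count[OF elim])
    have up: "card (SS N) \<le> card GV * card (Rect (N - m0)) + card LS * (card (Rect (N - m0)) - card (Rect (N - m0 - 1)))"
      by (rule upper_count[OF elim])
    have mono: "card (Rect (N - m0 - 1)) \<le> card (Rect (N - m0))"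
    proof -
      have "card (Rect (N - m0 - 1)) \<le> card (GoodRect (Suc (N - m0 - 1)))" by (rule card_GoodRect)
      also have "\<dots> \<le> card (Rect (Suc (N - m0 - 1)))"
        by (rule card_mono) (auto simp: GoodRect_def finite_ssyt)
      also have "Suc (N - m0 - 1) = N - m0" using elim by simp
      finally show ?thesis .
    qed
    have lo': "c0 * real (card (Rect (N - m0))) \<le> real (card (SS N))"
      using lo unfolding c0_def by (metis of_nat_le_iff of_nat_mult)
    have up': "real (card (SS N)) \<le> c0 * real (card (Rect (N - m0))) + K * (real (card (Rect (N - m0))) - real (card (Rect (N - m0 - 1))))"
    proof -
      have "real (card (SS N)) \<le> real (card GV * card (Rect (N - m0)) + card LS * (card (Rect (N - m0)) - card (Rect (N - m0 - 1))))"
        using up by (simp only: of_nat_le_iff)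
      also have "\<dots> = c0 * real (card (Rect (N - m0))) + K * (real (card (Rect (N - m0))) - real (card (Rect (N - m0 - 1))))"
        using mono by (simp add: c0_def K_def of_nat_diff)
      finally show ?thesis .
    qed
    show ?case using lo' up' unfolding R by simp
  qed
  have main: "(\<lambda>N. real (card (SS N))) \<sim>[at_top] (\<lambda>N. real N ^ (d * (M - d)) * C * c0)"
    by (rule squeeze_asymp[OF C0 c0pos ev])
  show ?thesis unfolding Ceq sumeq skew_schur_ones_def using main .
qed


end
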